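(* The exponential generating function $N_1(z)=\sum_{n} N_{1,n}\frac{z^n}{n!}$ of vertex-labeled normal networks with exactly one reticulation vertex ($N_{1,n}$ being the number of such networks with $n$ vertices) is \[ N_1(z)=\frac{z\left(1-\sqrt{1-2z^2}\,\right)^3}{2(1-2z^2)^{3/2}}=z\frac{\tilde{a}_1(z^2)-\tilde{b}_1(z^2)\sqrt{1-2z^2}}{(1-2z^2)^{3/2}}, \] where $\tilde{a}_1(z)=2-3z$ and $\tilde{b}_1(z)=2-z$.
   Context: A phylogenetic network is a connected rooted directed acyclic graph whose vertices are: a root with in-degree 0 and out-degree 2 (unless the network is a single vertex); tree vertices with in-degree 1 and out-degree 2; reticulation vertices with in-degree 2 and out-degree 1; leaves with in-degree 1 and out-degree 0. A tree-child network is a phylogenetic network in which every non-leaf vertex has at least one child that is not a reticulation vertex. A normal network is a tree-child network in which, whenever there is a directed path of length at least 2 from $u$ to $v$, there is no edge from $u$ to $v$. A vertex-labeled network with $n$ vertices has its vertices labeled by distinct labels $1,\dots,n$. *)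

theory Defs
  imports Complex_Main
begin

text \<open>A vertex-labeled network with n vertices has vertex set {1..n};
  it is determined by its set of directed edges E.\<close>

definition verts :: "nat \<Rightarrow> nat set" where
  "verts n = {1..n}"

definition indeg :: "(nat \<times> nat) set \<Rightarrow> nat \<Rightarrow> nat" where
  "indeg E v = card {u. (u, v) \<in> E}"

definition outdeg :: "(nat \<times> nat) set \<Rightarrow> nat \<Rightarrow> nat" where
  "outdeg E v = card {w. (v, w) \<in> E}"

definition is_reticulation :: "(nat \<times> nat) set \<Rightarrow> nat \<Rightarrow> bool" where
  "is_reticulation E v \<longleftrightarrow> indeg E v = 2 \<and> outdeg E v = 1"

definition is_leaf :: "(nat \<times> nat) set \<Rightarrow> nat \<Rightarrow> bool" where
  "is_leaf E v \<longleftrightarrow> indeg E v = 1 \<and> outdeg E v = 0"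

definition phylo_network :: "nat \<Rightarrow> (nat \<times> nat) set \<Rightarrow> bool" where
  "phylo_network n E \<longleftrightarrow>
     n \<ge> 1 \<and>
     E \<subseteq> verts n \<times> verts n \<and>
     (\<forall>v. (v, v) \<notin> E\<^sup>+) \<and>
     (\<forall>u\<in>verts n. \<forall>v\<in>verts n. (u, v) \<in> (E \<union> E\<inverse>)\<^sup>*) \<and>
     ((n = 1 \<and> E = {}) \<or>
      (card {v \<in> verts n. indeg E v = 0} = 1 \<and>
       (\<forall>v\<in>verts n.
          (indeg E v = 0 \<and> outdeg E v = 2) \<or>
          (indeg E v = 1 \<and> outdeg E v = 2) \<or>
          (indeg E v = 2 \<and> outdeg E v = 1) \<or>
          (indeg E v = 1 \<and> outdeg E v = 0))))"

definition tree_child :: "nat \<Rightarrow> (nat \<times> nat) set \<Rightarrow> bool" where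
  "tree_child n E \<longleftrightarrow> phylo_network n E \<and>
     (\<forall>v\<in>verts n. outdeg E v \<noteq> 0 \<longrightarrow> (\<exists>w. (v, w) \<in> E \<and> \<not> is_reticulation E w))"

definition normal_network :: "nat \<Rightarrow> (nat \<times> nat) set \<Rightarrow> bool" where
  "normal_network n E \<longleftrightarrow> tree_child n E \<and>
     (\<forall>u v. (u, v) \<in> E O E\<^sup>+ \<longrightarrow> (u, v) \<notin> E)"

definition N1 :: "nat \<Rightarrow> nat" where
  "N1 n = card {E. normal_network n E \<and> card {v \<in> verts n. is_reticulation E v} = 1}"

definition a1 :: "real \<Rightarrow> real" where "a1 z = 2 - 3 * z"
definition b1 :: "real \<Rightarrow> real" where "b1 z = 2 - z"

end

theory Submission
  imports Defs "HOL-Analysis.Generalised_Binomial_Theorem"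
begin


definition pars :: "(nat \<times> nat) set \<Rightarrow> nat \<Rightarrow> nat set" where "pars E v = {u. (u,v) \<in> E}"
definition chs :: "(nat \<times> nat) set \<Rightarrow> nat \<Rightarrow> nat set" where "chs E v = {w. (v,w) \<in> E}"

definition ins :: "(nat \<times> nat) set \<Rightarrow> nat \<Rightarrow> nat \<Rightarrow> nat \<Rightarrow> (nat \<times> nat) set" where
  "ins E x y v = {e\<in>E. snd e \<noteq> v} \<union> {(p,y)|p. (p,v) \<in> E} \<union> {(y,v),(y,x)}"
definition rem :: "(nat \<times> nat) set \<Rightarrow> nat \<Rightarrow> nat \<Rightarrow> nat \<Rightarrow> (nat \<times> nat) set" where
  "rem E x y z = {e\<in>E. fst e \<notin> {x,y} \<and> snd e \<notin> {x,y}} \<union> {(p,z)|p. (p,y) \<in> E}"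

lemma pars_ins_other: "E \<subseteq> V \<times> V \<Longrightarrow> x \<notin> V \<Longrightarrow> y \<notin> V \<Longrightarrow> u \<in> V \<Longrightarrow> u \<noteq> v \<Longrightarrow>
   pars (ins E x y v) u = pars E u"
  unfolding pars_def ins_def by auto
lemma pars_ins_v: "E \<subseteq> V \<times> V \<Longrightarrow> x \<notin> V \<Longrightarrow> y \<notin> V \<Longrightarrow> x \<noteq> y \<Longrightarrow> v \<in> V \<Longrightarrow> pars (ins E x y v) v = {y}"
  unfolding pars_def ins_def by auto
lemma pars_ins_y: "E \<subseteq> V \<times> V \<Longrightarrow> x \<notin> V \<Longrightarrow> y \<notin> V \<Longrightarrow> x \<noteq> y \<Longrightarrow> v \<in> V \<Longrightarrow> pars (ins E x y v) y = pars E v"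
  unfolding pars_def ins_def by auto
lemma pars_ins_x: "E \<subseteq> V \<times> V \<Longrightarrow> x \<notin> V \<Longrightarrow> y \<notin> V \<Longrightarrow> x \<noteq> y \<Longrightarrow> v \<in> V \<Longrightarrow> pars (ins E x y v) x = {y}"
  unfolding pars_def ins_def by auto
lemma chs_ins_other: "E \<subseteq> V \<times> V \<Longrightarrow> x \<notin> V \<Longrightarrow> y \<notin> V \<Longrightarrow> u \<in> V \<Longrightarrow>
   chs (ins E x y v) u = chs E u - {v} \<union> (if (u,v) \<in> E then {y} else {})"
  unfolding chs_def ins_def by auto
lemma chs_ins_y: "E \<subseteq> V \<times> V \<Longrightarrow> x \<notin> V \<Longrightarrow> y \<notin> V \<Longrightarrow> x \<noteq> y \<Longrightarrow> chs (ins E x y v) y = {v,x}"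
  unfolding chs_def ins_def by auto
lemma chs_ins_x: "E \<subseteq> V \<times> V \<Longrightarrow> x \<notin> V \<Longrightarrow> y \<notin> V \<Longrightarrow> x \<noteq> y \<Longrightarrow> chs (ins E x y v) x = {}"
  unfolding chs_def ins_def by auto

lemma rem_ins: "E \<subseteq> V \<times> V \<Longrightarrow> x \<notin> V \<Longrightarrow> y \<notin> V \<Longrightarrow> x \<noteq> y \<Longrightarrow> v \<in> V \<Longrightarrow> rem (ins E x y v) x y v = E"
  unfolding rem_def ins_def by auto

lemma ins_sub: "E \<subseteq> V \<times> V \<Longrightarrow> v \<in> V \<Longrightarrow> ins E x y v \<subseteq> insert x (insert y V) \<times> insert x (insert y V)"
  unfolding ins_def by auto

lemma ins_rtrancl_proj:
  assumes sub: "E \<subseteq> V \<times> V" and xV: "x \<notin> V" and yV: "y \<notin> V" and vV: "v \<in> V"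
    and st: "(u,w) \<in> (ins E x y v)\<^sup>*"
  shows "((if u \<in> {x,y} then v else u), (if w \<in> {x,y} then v else w)) \<in> E\<^sup>*"
  using st
proof (induction rule: rtrancl_induct)
  case base then show ?case by simp
next
  case (step w1 w2)
  let ?f = "\<lambda>q. if q \<in> {x,y} then v else q"
  have "(?f w1, ?f w2) \<in> E\<^sup>="
    using step(2) sub xV yV vV unfolding ins_def by auto
  then show ?case using step(3) by (auto intro: rtrancl_into_rtrancl)
qed

lemma ins_trancl_V:
  assumes sub: "E \<subseteq> V \<times> V" and xV: "x \<notin> V" and yV: "y \<notin> V" and vV: "v \<in> V"
    and st: "(u,w) \<in> (ins E x y v)\<^sup>+" and "u \<in> V" "w \<in> V" "u \<noteq> w"
  shows "(u,w) \<in> E\<^sup>+"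
proof -
  have "(u,w) \<in> E\<^sup>*" using ins_rtrancl_proj[OF sub xV yV vV trancl_into_rtrancl[OF st]] assms(6,7) xV yV
    by (auto split: if_splits)
  then show ?thesis using \<open>u \<noteq> w\<close> by (simp add: rtrancl_eq_or_trancl)
qed

lemma rem_sub_trancl:
  assumes "(y,z) \<in> E"
  shows "rem E x y z \<subseteq> E\<^sup>+"
  using assms unfolding rem_def by auto

lemma sub_trancl_trancl: "R \<subseteq> S\<^sup>+ \<Longrightarrow> R\<^sup>+ \<subseteq> S\<^sup>+"
proof
  fix q assume "R \<subseteq> S\<^sup>+" "q \<in> R\<^sup>+"
  then show "q \<in> S\<^sup>+" by (metis trancl_mono trancl_id trans_trancl)
qed
lemma rem_trancl: "(y,z) \<in> E \<Longrightarrow> (rem E x y z)\<^sup>+ \<subseteq> E\<^sup>+"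
  by (rule sub_trancl_trancl[OF rem_sub_trancl])


locale netw =
  fixes V :: "nat set" and E :: "(nat \<times> nat) set" and a \<rho> r b c :: nat and h :: "nat \<Rightarrow> nat"
  assumes fin: "finite V" and sub: "E \<subseteq> V \<times> V" and rank: "\<And>u w. (u,w) \<in> E \<Longrightarrow> h u < h w"
  and rootV: "\<rho> \<in> V" and root_p: "pars E \<rho> = {}" and root_c: "chs E \<rho> \<noteq> {}"
  and root_u: "\<And>v. v \<in> V \<Longrightarrow> pars E v = {} \<Longrightarrow> v = \<rho>"
  and ab: "a \<noteq> b" and rp: "pars E r = {a,b}" and rc: "chs E r = {c}"
  and nab: "(a,b) \<notin> E\<^sup>+" and nba: "(b,a) \<notin> E\<^sup>+"
  and degp: "\<And>v. v \<in> V \<Longrightarrow> v \<noteq> r \<Longrightarrow> pars E v = {} \<or> (\<exists>p. pars E v = {p})"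
  and degc: "\<And>v. v \<in> V \<Longrightarrow> v \<noteq> r \<Longrightarrow> chs E v = {} \<or> (\<exists>c d. c \<noteq> d \<and> chs E v = {c,d})"

definition net :: "nat set \<Rightarrow> (nat \<times> nat) set \<Rightarrow> nat \<Rightarrow> bool" where
  "net V E a \<longleftrightarrow> (\<exists>\<rho> r b c h. netw V E a \<rho> r b c h)"

lemma net_netw: "net V E a \<Longrightarrow> \<exists>\<rho> r b c h. netw V E a \<rho> r b c h"
  unfolding net_def by simp

lemma netw_net: "netw V E a \<rho> r b c h \<Longrightarrow> net V E a"
  unfolding net_def by blast

context netw begin

lemma trancl_rank: "(u,w) \<in> E\<^sup>+ \<Longrightarrow> h u < h w"
  by (induction rule: trancl_induct) (auto dest: rank)

lemma acyc: "(u,u) \<notin> E\<^sup>+"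
  using trancl_rank by blast

lemma inV1: "(u,w) \<in> E \<Longrightarrow> u \<in> V" and inV2: "(u,w) \<in> E \<Longrightarrow> w \<in> V"
  using sub by auto

lemma finE: "finite E"
  using sub fin by (meson finite_SigmaI finite_subset)

lemma ar: "(a,r) \<in> E" and br: "(b,r) \<in> E" and rcE: "(r,c) \<in> E"
  using rp rc unfolding pars_def chs_def by auto

lemma rV: "r \<in> V" and aV: "a \<in> V" and bV: "b \<in> V" and cV: "c \<in> V"
  using ar br rcE sub by auto

lemma two_par: "(u,w) \<in> E \<Longrightarrow> (u',w) \<in> E \<Longrightarrow> u \<noteq> u' \<Longrightarrow> w = r"
proof (rule ccontr)
  assume e: "(u,w) \<in> E" "(u',w) \<in> E" "u \<noteq> u'" "w \<noteq> r"
  then have "w \<in> V" using sub by auto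
  from degp[OF this e(4)] e show False unfolding pars_def by (auto simp: set_eq_iff)
qed

lemma par_r: "(u,r) \<in> E \<longleftrightarrow> u = a \<or> u = b"
  using rp unfolding pars_def by auto

lemma reach: "v \<in> V \<Longrightarrow> (\<rho>, v) \<in> E\<^sup>*"
proof (induction "h v" arbitrary: v rule: less_induct)
  case less
  show ?case
  proof (cases "pars E v = {}")
    case True then show ?thesis using root_u less by auto
  next
    case False
    then obtain u where u: "(u,v) \<in> E" unfolding pars_def by auto
    then have "(\<rho>,u) \<in> E\<^sup>*" using less rank sub by auto
    then show ?thesis using u by auto
  qed
qed

lemma a_ne_root: "a \<noteq> \<rho>"
proof
  assume "a = \<rho>"
  then have "(a,b) \<in> E\<^sup>*" using reach bV by auto
  then show False using ab nab by (simp add: rtrancl_eq_or_trancl)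
qed

lemma b_ne_root: "b \<noteq> \<rho>"
proof
  assume "b = \<rho>"
  then have "(b,a) \<in> E\<^sup>*" using reach aV by auto
  then show False using ab nba by (simp add: rtrancl_eq_or_trancl)
qed

lemma r_ne_root: "r \<noteq> \<rho>" using rp root_p by auto
lemma a_ne_r: "a \<noteq> r" using ar rank by fastforce
lemma b_ne_r: "b \<noteq> r" using br rank by fastforce
lemma c_ne_r: "c \<noteq> r" using rcE rank by fastforce
lemma c_ne_a: "c \<noteq> a" using rank[OF rcE] rank[OF ar] by auto
lemma c_ne_b: "c \<noteq> b" using rank[OF rcE] rank[OF br] by auto
lemma c_ne_root: "c \<noteq> \<rho>" using rcE root_p unfolding pars_def by auto
lemma a_ne_b_edge: "(a,b) \<notin> E" using nab by auto
lemma b_ne_a_edge: "(b,a) \<notin> E" using nba by auto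

lemma chs_a: "\<exists>s. s \<noteq> r \<and> chs E a = {r,s}"
proof -
  have "r \<in> chs E a" using ar unfolding chs_def by auto
  then show ?thesis using degc[OF aV a_ne_r] by auto
qed

lemma chs_b: "\<exists>s. s \<noteq> r \<and> chs E b = {r,s}"
proof -
  have "r \<in> chs E b" using br unfolding chs_def by auto
  then show ?thesis using degc[OF bV b_ne_r] by auto
qed

lemma pars_single: "v \<in> V \<Longrightarrow> v \<noteq> \<rho> \<Longrightarrow> v \<noteq> r \<Longrightarrow> \<exists>p. pars E v = {p}"
  using degp root_u by blast

lemma ret_unique: "a' \<noteq> b' \<Longrightarrow> pars E r' = {a',b'} \<Longrightarrow> r' = r"
  using two_par unfolding pars_def by blast

end


lemma two_el: "c \<noteq> d \<Longrightarrow> S = {c,d} \<Longrightarrow> \<exists>c d. c \<noteq> d \<and> S = {c,d}"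
  by (intro exI[where x=c] exI[where x=d] conjI)

lemma chs_ins_empty: "E \<subseteq> V \<times> V \<Longrightarrow> x \<notin> V \<Longrightarrow> y \<notin> V \<Longrightarrow> w \<in> V \<Longrightarrow>
   chs (ins E x y v) w = {} \<longleftrightarrow> chs E w = {}"
  by (auto simp: chs_ins_other) (auto simp: chs_def)

lemma ins_netw:
  assumes N: "netw V E a \<rho> r b c h" and xV: "x \<notin> V" and yV: "y \<notin> V" and xy: "x \<noteq> y"
    and vV: "v \<in> V" and vr: "v \<noteq> r"
  shows "netw (insert x (insert y V)) (ins E x y v) a (if v = \<rho> then y else \<rho>) r b (if c = v then y else c)
     (\<lambda>u. if u = y then 2*h v+1 else if u = x then 2*h v+2 else 2*h u+2)"
proof -
  interpret netw V E a \<rho> r b c h by fact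
  let ?E = "ins E x y v"
  let ?h = "\<lambda>u. if u = y then 2*h v+1 else if u = x then 2*h v+2 else 2*h u+2"
  note P1 = pars_ins_other[OF sub xV yV] and P2 = pars_ins_v[OF sub xV yV xy vV]
   and P3 = pars_ins_y[OF sub xV yV xy vV] and P4 = pars_ins_x[OF sub xV yV xy vV]
   and C1 = chs_ins_other[OF sub xV yV] and C2 = chs_ins_y[OF sub xV yV xy] and C3 = chs_ins_x[OF sub xV yV xy]
  show ?thesis
  proof (rule netw.intro)
    show "finite (insert x (insert y V))" using fin by simp
    show "?E \<subseteq> insert x (insert y V) \<times> insert x (insert y V)" by (rule ins_sub[OF sub vV])
    show "?h u < ?h w" if "(u,w) \<in> ?E" for u w
    proof -
      have "(u,w) \<in> E \<and> w \<noteq> v \<or> (w = y \<and> (u,v) \<in> E) \<or> (u = y \<and> w = v) \<or> (u = y \<and> w = x)"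
        using that unfolding ins_def by auto
      then show ?thesis
      proof (elim disjE conjE)
        assume e: "(u,w) \<in> E" "w \<noteq> v"
        then have "u \<in> V" "w \<in> V" using sub by auto
        then show ?thesis using e rank[OF e(1)] xV yV by auto
      next
        assume e: "w = y" "(u,v) \<in> E"
        then have "u \<in> V" using sub by auto
        then show ?thesis using e rank[OF e(2)] xV yV xy by auto
      qed (use xV yV xy vV in auto)
    qed
    show "(if v = \<rho> then y else \<rho>) \<in> insert x (insert y V)" using rootV by auto
    show "pars ?E (if v = \<rho> then y else \<rho>) = {}"
      using P3 P1[OF rootV] root_p by auto
    show "chs ?E (if v = \<rho> then y else \<rho>) \<noteq> {}"
    proof (cases "v = \<rho>")
      case True then show ?thesis using C2 by simp
    next
      case False
      then show ?thesis using C1[OF rootV] root_c unfolding chs_def by auto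
    qed
    show "u = (if v = \<rho> then y else \<rho>)" if uW: "u \<in> insert x (insert y V)" and pu: "pars ?E u = {}" for u
    proof -
      consider "u = x" | "u = y" | "u = v" | "u \<in> V" "u \<noteq> v" using uW by auto
      then show ?thesis
      proof cases
        case 1 then show ?thesis using P4 pu by simp
      next
        case 2 then show ?thesis using P3 pu root_u[OF vV] by auto
      next
        case 3 then show ?thesis using P2 pu by simp
      next
        case 4 then show ?thesis using P1[OF 4] pu root_u[OF 4(1)] by auto
      qed
    qed
    show "a \<noteq> b" by (rule ab)
    show "pars ?E r = {a,b}" using P1[OF rV] vr rp by auto
    show "chs ?E r = {if c = v then y else c}"
    proof -
      have "(r,v) \<in> E \<longleftrightarrow> v = c" using rc unfolding chs_def by auto
      then show ?thesis using C1[OF rV] rc by auto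
    qed
    show "(a,b) \<notin> ?E\<^sup>+" using ins_trancl_V[OF sub xV yV vV _ aV bV ab] nab by blast
    show "(b,a) \<notin> ?E\<^sup>+" using ins_trancl_V[OF sub xV yV vV _ bV aV] ab nba by blast
    show "pars ?E u = {} \<or> (\<exists>p. pars ?E u = {p})" if uW: "u \<in> insert x (insert y V)" and ur: "u \<noteq> r" for u
    proof -
      consider "u = x" | "u = y" | "u = v" | "u \<in> V" "u \<noteq> v" using uW by auto
      then show ?thesis
      proof cases
        case 1 then show ?thesis using P4 by simp
      next
        case 2 then show ?thesis using P3 degp[OF vV vr] by simp
      next
        case 3 then show ?thesis using P2 by simp
      next
        case 4 then show ?thesis using P1[OF 4] degp[OF 4(1) ur] by simp
      qed
    qed
    show "chs ?E u = {} \<or> (\<exists>c d. c \<noteq> d \<and> chs ?E u = {c,d})" if uW: "u \<in> insert x (insert y V)" and ur: "u \<noteq> r" for u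
    proof -
      consider "u = x" | "u = y" | "u \<in> V" using uW by auto
      then show ?thesis
      proof cases
        case 1 then show ?thesis using C3 by simp
      next
        case 2
        have "v \<noteq> x" using xV vV by auto
        then show ?thesis using C2 2 by (intro disjI2 two_el) auto
      next
        case 3
        have "u \<noteq> r" by fact
        from degc[OF 3 this] show ?thesis
        proof
          assume "chs E u = {}"
          then show ?thesis using C1[OF 3] unfolding chs_def by auto
        next
          assume "\<exists>c d. c \<noteq> d \<and> chs E u = {c,d}"
          then obtain c1 d1 where cd: "c1 \<noteq> d1" "chs E u = {c1,d1}" by blast
          then have "c1 \<in> V" "d1 \<in> V" using sub unfolding chs_def by auto
          have uv: "(u,v) \<in> E \<longleftrightarrow> v = c1 \<or> v = d1" using cd unfolding chs_def by auto
          have ch: "chs ?E u = {c1,d1} - {v} \<union> (if (u,v) \<in> E then {y} else {})"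
            using C1[OF 3] cd by simp
          show ?thesis
          proof (cases "v = c1")
            case True
            then have "chs ?E u = {y,d1}" using ch uv cd by auto
            then show ?thesis using \<open>d1 \<in> V\<close> yV by (intro disjI2 two_el) auto
          next
            case F1: False
            show ?thesis
            proof (cases "v = d1")
              case True
              then have "chs ?E u = {c1,y}" using ch uv cd F1 by auto
              then show ?thesis using \<open>c1 \<in> V\<close> yV by (intro disjI2 two_el) auto
            next
              case False
              then have "chs ?E u = {c1,d1}" using ch uv cd F1 by auto
              then show ?thesis using cd by (intro disjI2 two_el) auto
            qed
          qed
        qed
      qed
    qed
  qed
qed


definition rml :: "(nat \<times> nat) set \<Rightarrow> nat \<Rightarrow> nat \<Rightarrow> nat \<Rightarrow> bool" where
  "rml E x y z \<longleftrightarrow> x \<noteq> z \<and> chs E x = {} \<and> pars E x = {y} \<and> pars E z = {y} \<and> chs E y = {x,z}"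

lemma rml_ins: "E \<subseteq> V \<times> V \<Longrightarrow> x \<notin> V \<Longrightarrow> y \<notin> V \<Longrightarrow> x \<noteq> y \<Longrightarrow> v \<in> V \<Longrightarrow> rml (ins E x y v) x y v"
  unfolding rml_def using chs_ins_x[of E V x y v] pars_ins_x[of E V x y v] pars_ins_v[of E V x y v]
    chs_ins_y[of E V x y v] by auto

context netw begin

lemma rml_facts:
  assumes "rml E x y z"
  shows "x \<noteq> y" "y \<noteq> z" "x \<in> V" "y \<in> V" "z \<in> V" "(y,x) \<in> E" "(y,z) \<in> E"
    "x \<noteq> r" "y \<noteq> r" "z \<noteq> r" "\<And>u. (x,u) \<notin> E" "\<And>u. (u,x) \<in> E \<longleftrightarrow> u = y" "\<And>u. (u,z) \<in> E \<longleftrightarrow> u = y"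
    "\<And>w. (y,w) \<in> E \<longleftrightarrow> w = x \<or> w = z" "x \<noteq> z"
proof -
  note R = assms[unfolded rml_def]
  show yx: "(y,x) \<in> E" and yz: "(y,z) \<in> E" using R unfolding chs_def by auto
  show "x \<noteq> y" using rank[OF yx] by auto
  show "y \<noteq> z" using rank[OF yz] by auto
  show "x \<in> V" "y \<in> V" "z \<in> V" using yx yz sub by auto
  show "\<And>u. (x,u) \<notin> E" using R unfolding chs_def by auto
  show "\<And>u. (u,x) \<in> E \<longleftrightarrow> u = y" using R unfolding pars_def by auto
  show "\<And>u. (u,z) \<in> E \<longleftrightarrow> u = y" using R unfolding pars_def by auto
  show "\<And>w. (y,w) \<in> E \<longleftrightarrow> w = x \<or> w = z" using R unfolding chs_def by auto
  show "x \<noteq> r" using R rc by auto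
  show "x \<noteq> z" using R by simp
  show "y \<noteq> r"
  proof
    assume "y = r"
    then have "{x,z} = {c}" using R rc by simp
    then show False using R by auto
  qed
  show "z \<noteq> r"
  proof
    assume "z = r"
    then have "{y} = {a,b}" using R rp by simp
    then show False using ab by (auto simp: doubleton_eq_iff)
  qed
qed

lemma rem_netw:
  assumes X: "rml E x y z"
  shows "netw (V - {x,y}) (rem E x y z) a (if y = \<rho> then z else \<rho>) r b (if c = y then z else c) h"
    and "ins (rem E x y z) x y z = E"
    and "z \<in> V - {x,y}" and "pars (rem E x y z) z = pars E y"
proof -
  note F = rml_facts[OF X]
  let ?E = "rem E x y z"
  have P1: "pars ?E u = pars E u" if "u \<notin> {x,y}" "u \<noteq> z" for u
    using that F unfolding pars_def rem_def by auto
  show P2: "pars ?E z = pars E y"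
    using F unfolding pars_def rem_def by auto
  have C1: "chs ?E u = chs E u - {y} \<union> (if (u,y) \<in> E then {z} else {})" if "u \<notin> {x,y}" for u
    using that F unfolding chs_def rem_def by auto
  show "z \<in> V - {x,y}" using F by auto
  show "ins ?E x y z = E"
  proof (rule set_eqI)
    fix e :: "nat \<times> nat"
    obtain u w where e: "e = (u,w)" by (cases e)
    show "e \<in> ins ?E x y z \<longleftrightarrow> e \<in> E"
      unfolding e ins_def rem_def using F by auto
  qed
  have rx: "r \<notin> {x,y}" "r \<noteq> z" using F by auto
  show "netw (V - {x,y}) ?E a (if y = \<rho> then z else \<rho>) r b (if c = y then z else c) h"
  proof (rule netw.intro)
    show "finite (V - {x,y})" using fin by simp
    show "?E \<subseteq> (V - {x,y}) \<times> (V - {x,y})"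
    proof
      fix e assume "e \<in> ?E"
      then obtain u w where e: "e = (u,w)" "(u,w) \<in> E \<and> u \<notin> {x,y} \<and> w \<notin> {x,y} \<or> (w = z \<and> (u,y) \<in> E)"
        unfolding rem_def by (cases e) auto
      show "e \<in> (V - {x,y}) \<times> (V - {x,y})"
        using e(2)
      proof
        assume "(u,w) \<in> E \<and> u \<notin> {x,y} \<and> w \<notin> {x,y}"
        then show ?thesis using e sub by auto
      next
        assume h: "w = z \<and> (u,y) \<in> E"
        then have "u \<noteq> y" using rank by fastforce
        moreover have "u \<noteq> x" using h F by auto
        ultimately show ?thesis using h e sub F by auto
      qed
    qed
    show "h u < h w" if "(u,w) \<in> ?E" for u w
    proof -
      have "(u,w) \<in> E \<or> (w = z \<and> (u,y) \<in> E)" using that unfolding rem_def by auto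
      then show ?thesis
      proof
        assume "(u,w) \<in> E" then show ?thesis by (rule rank)
      next
        assume "w = z \<and> (u,y) \<in> E"
        then show ?thesis using rank[of u y] rank[OF F(7)] by auto
      qed
    qed
    show "(if y = \<rho> then z else \<rho>) \<in> V - {x,y}"
    proof (cases "y = \<rho>")
      case True then show ?thesis using F by simp
    next
      case False
      have "\<rho> \<noteq> x" using F root_p unfolding pars_def by auto
      then show ?thesis using False rootV by simp
    qed
    have rho_nz: "\<rho> \<noteq> z" using F root_p unfolding pars_def by auto
    show "pars ?E (if y = \<rho> then z else \<rho>) = {}"
    proof (cases "y = \<rho>")
      case True then show ?thesis using P2 root_p by simp
    next
      case False
      have "\<rho> \<noteq> x" using F root_p unfolding pars_def by auto
      then show ?thesis using False P1[of \<rho>] rho_nz root_p by simp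
    qed
    show "chs ?E (if y = \<rho> then z else \<rho>) \<noteq> {}"
    proof (cases "y = \<rho>")
      case True
      have "(\<rho>, a) \<in> E\<^sup>+" using reach[OF aV] a_ne_root by (simp add: rtrancl_eq_or_trancl)
      then obtain q where q: "(\<rho>,q) \<in> E" "(q,a) \<in> E\<^sup>*" by (meson tranclD)
      then have "q = x \<or> q = z" using F True by auto
      moreover have "q \<noteq> x"
      proof
        assume "q = x"
        then have "(x,r) \<in> E\<^sup>+" using q(2) ar by auto
        then show False using F(11) by (meson tranclD)
      qed
      ultimately have "(z,r) \<in> E\<^sup>+" using q(2) ar by auto
      then obtain w where "(z,w) \<in> E" by (meson tranclD)
      moreover have "(z,y) \<notin> E" using rank[OF F(7)] rank by fastforce
      ultimately have "w \<in> chs ?E z" using C1[of z] F unfolding chs_def by auto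
      then show ?thesis using True by auto
    next
      case False
      have "\<rho> \<noteq> x" using F root_p unfolding pars_def by auto
      then have "chs ?E \<rho> = chs E \<rho> - {y} \<union> (if (\<rho>,y) \<in> E then {z} else {})" using C1 False by simp
      then show ?thesis using root_c False unfolding chs_def by auto
    qed
    show "u = (if y = \<rho> then z else \<rho>)" if uW: "u \<in> V - {x,y}" and pu: "pars ?E u = {}" for u
    proof (cases "u = z")
      case True
      then have "pars E y = {}" using pu P2 by simp
      then show ?thesis using root_u[OF F(4)] True by simp
    next
      case False
      then have "pars E u = {}" using P1[of u] uW pu by simp
      then have "u = \<rho>" using root_u uW by simp
      moreover have "\<rho> \<noteq> y" using \<open>u = \<rho>\<close> uW by simp
      ultimately show ?thesis by simp
    qed
    show "a \<noteq> b" by (rule ab)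
    show "pars ?E r = {a,b}" using P1[OF rx] rp by simp
    show "chs ?E r = {if c = y then z else c}"
    proof -
      have "(r,y) \<in> E \<longleftrightarrow> y = c" using rc unfolding chs_def by auto
      then show ?thesis using C1[OF rx(1)] rc by auto
    qed
    show "(a,b) \<notin> ?E\<^sup>+" using rem_trancl[OF F(7)] nab by blast
    show "(b,a) \<notin> ?E\<^sup>+" using rem_trancl[OF F(7)] nba by blast
    show "pars ?E u = {} \<or> (\<exists>p. pars ?E u = {p})" if uW: "u \<in> V - {x,y}" and ur: "u \<noteq> r" for u
    proof (cases "u = z")
      case True then show ?thesis using P2 degp[OF F(4) F(9)] by simp
    next
      case False then show ?thesis using P1[of u] uW degp[of u] ur by simp
    qed
    show "chs ?E u = {} \<or> (\<exists>c d. c \<noteq> d \<and> chs ?E u = {c,d})" if uW: "u \<in> V - {x,y}" and ur: "u \<noteq> r" for u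
    proof (cases "(u,y) \<in> E")
      case False
      then have "y \<notin> chs E u" unfolding chs_def by auto
      then have "chs ?E u = chs E u" using C1[of u] uW False by auto
      then show ?thesis using degc[of u] uW ur by simp
    next
      case True
      then have "chs E u \<noteq> {}" unfolding chs_def by auto
      then obtain c1 d1 where cd: "c1 \<noteq> d1" "chs E u = {c1,d1}" using degc[of u] uW ur by auto
      then have "y = c1 \<or> y = d1" using True unfolding chs_def by auto
      then obtain w where w: "chs E u = {y,w}" "w \<noteq> y" using cd by auto
      have "(u,w) \<in> E" using w unfolding chs_def by auto
      have "w \<noteq> z" using \<open>(u,w) \<in> E\<close> F(13) uW by auto
      have "chs ?E u = {w,z}" using C1[of u] uW w True by auto
      then show ?thesis using \<open>w \<noteq> z\<close> by (intro disjI2 two_el)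
    qed
  qed
qed

end


definition flA :: "(nat \<times> nat) set \<Rightarrow> nat \<Rightarrow> bool" where
  "flA E a \<longleftrightarrow> (\<forall>r' b' w. a \<noteq> b' \<longrightarrow> pars E r' = {a,b'} \<longrightarrow> (a,w) \<in> E \<longrightarrow> w \<noteq> r' \<longrightarrow> chs E w = {})"
definition flB :: "(nat \<times> nat) set \<Rightarrow> nat \<Rightarrow> bool" where
  "flB E a \<longleftrightarrow> (\<forall>r' b' w. a \<noteq> b' \<longrightarrow> pars E r' = {a,b'} \<longrightarrow> (b',w) \<in> E \<longrightarrow> w \<noteq> r' \<longrightarrow> chs E w = {})"
definition flC :: "(nat \<times> nat) set \<Rightarrow> nat \<Rightarrow> bool" where
  "flC E a \<longleftrightarrow> (\<forall>r' b' w. a \<noteq> b' \<longrightarrow> pars E r' = {a,b'} \<longrightarrow> (r',w) \<in> E \<longrightarrow> chs E w = {})"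
definition fl :: "(nat \<times> nat) set \<Rightarrow> nat \<Rightarrow> bool \<times> bool \<times> bool" where
  "fl E a = (flA E a, flB E a, flC E a)"

definition slot :: "(nat \<times> nat) set \<Rightarrow> nat \<Rightarrow> bool" where
  "slot E v \<longleftrightarrow> (\<forall>u u'. (u,v) \<in> E \<longrightarrow> (u',v) \<in> E \<longrightarrow> u = u')"

context netw begin

lemma ret_ab: "a \<noteq> b' \<Longrightarrow> pars E r' = {a,b'} \<Longrightarrow> r' = r \<and> b' = b"
proof -
  assume h: "a \<noteq> b'" "pars E r' = {a,b'}"
  then have "r' = r" using ret_unique by blast
  then have "{a,b'} = {a,b}" using h rp by simp
  then show ?thesis using h ab \<open>r' = r\<close> by (auto simp: doubleton_eq_iff)
qed

lemma flA_iff: "flA E a \<longleftrightarrow> (\<forall>w. (a,w) \<in> E \<longrightarrow> w \<noteq> r \<longrightarrow> chs E w = {})"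
  unfolding flA_def using ret_ab ab rp by metis
lemma flB_iff: "flB E a \<longleftrightarrow> (\<forall>w. (b,w) \<in> E \<longrightarrow> w \<noteq> r \<longrightarrow> chs E w = {})"
  unfolding flB_def using ret_ab ab rp by metis
lemma flC_iff: "flC E a \<longleftrightarrow> (\<forall>w. (r,w) \<in> E \<longrightarrow> chs E w = {})"
  unfolding flC_def using ret_ab ab rp by metis

lemma slot_iff: "v \<in> V \<Longrightarrow> slot E v \<longleftrightarrow> v \<noteq> r"
proof
  assume "v \<in> V" "slot E v"
  then show "v \<noteq> r" using ar br ab unfolding slot_def by blast
next
  assume "v \<in> V" "v \<noteq> r"
  then show "slot E v" using two_par unfolding slot_def by blast
qed

lemma fl_ins:
  assumes xV: "x \<notin> V" and yV: "y \<notin> V" and xy: "x \<noteq> y" and vV: "v \<in> V" and vr: "v \<noteq> r"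
  shows "fl (ins E x y v) a = (flA E a \<and> (a,v) \<notin> E, flB E a \<and> (b,v) \<notin> E, flC E a \<and> (r,v) \<notin> E)"
proof -
  interpret I: netw "insert x (insert y V)" "ins E x y v" a "if v = \<rho> then y else \<rho>" r b "if c = v then y else c"
     "\<lambda>u. if u = y then 2*h v+1 else if u = x then 2*h v+2 else 2*h u+2"
    by (rule ins_netw[OF netw_axioms xV yV xy vV vr])
  note C1 = chs_ins_other[OF sub xV yV] and C2 = chs_ins_y[OF sub xV yV xy]
  have gen: "(\<forall>w. (u,w) \<in> ins E x y v \<longrightarrow> w \<noteq> r \<longrightarrow> chs (ins E x y v) w = {}) \<longleftrightarrow>
        (\<forall>w. (u,w) \<in> E \<longrightarrow> w \<noteq> r \<longrightarrow> chs E w = {}) \<and> (u,v) \<notin> E" if uV: "u \<in> V" for u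
  proof -
    have cu: "chs (ins E x y v) u = chs E u - {v} \<union> (if (u,v) \<in> E then {y} else {})" using C1[OF uV] .
    show ?thesis
    proof (cases "(u,v) \<in> E")
      case True
      then have "(u,y) \<in> ins E x y v" using cu unfolding chs_def by auto
      moreover have "y \<noteq> r" using yV rV by auto
      moreover have "chs (ins E x y v) y \<noteq> {}" using C2 by simp
      ultimately show ?thesis using True by blast
    next
      case False
      then have e: "(u,w) \<in> ins E x y v \<longleftrightarrow> (u,w) \<in> E" for w using cu unfolding chs_def by auto
      have "(u,w) \<in> E \<Longrightarrow> chs (ins E x y v) w = {} \<longleftrightarrow> chs E w = {}" for w
        using chs_ins_empty[OF sub xV yV] sub by auto
      then show ?thesis using e False by auto
    qed
  qed
  have A: "flA (ins E x y v) a \<longleftrightarrow> flA E a \<and> (a,v) \<notin> E"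
    using I.flA_iff flA_iff gen[OF aV] by simp
  have B: "flB (ins E x y v) a \<longleftrightarrow> flB E a \<and> (b,v) \<notin> E"
    using I.flB_iff flB_iff gen[OF bV] by simp
  have Cc: "flC (ins E x y v) a \<longleftrightarrow> flC E a \<and> (r,v) \<notin> E"
  proof -
    have "(\<forall>w. (r,w) \<in> ins E x y v \<longrightarrow> w \<noteq> r \<longrightarrow> chs (ins E x y v) w = {}) \<longleftrightarrow>
        (\<forall>w. (r,w) \<in> E \<longrightarrow> w \<noteq> r \<longrightarrow> chs E w = {}) \<and> (r,v) \<notin> E" by (rule gen[OF rV])
    moreover have "(r,w) \<in> ins E x y v \<Longrightarrow> w \<noteq> r" for w using I.rank by fastforce
    moreover have "(r,w) \<in> E \<Longrightarrow> w \<noteq> r" for w using rank by fastforce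
    ultimately show ?thesis using I.flC_iff flC_iff by blast
  qed
  show ?thesis unfolding fl_def using A B Cc by simp
qed

end


definition nt :: "bool \<times> bool \<times> bool \<Rightarrow> nat" where
  "nt g = (case g of (g1,g2,g3) \<Rightarrow> of_bool g1 + of_bool g2 + of_bool g3)"
definition mm :: "bool \<times> bool \<times> bool \<Rightarrow> bool \<times> bool \<times> bool \<Rightarrow> nat \<Rightarrow> nat" where
  "mm g f n = (case g of (g1,g2,g3) \<Rightarrow> if f = g then n - nt g else
     if (g1 \<and> f = (False,g2,g3)) \<or> (g2 \<and> f = (g1,False,g3)) \<or> (g3 \<and> f = (g1,g2,False)) then 1 else 0)"

lemma card_slots3:
  assumes S: "finite S" "p1 \<in> S" "p2 \<in> S" "p3 \<in> S" "p1 \<noteq> p2" "p1 \<noteq> p3" "p2 \<noteq> p3"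
  shows "card {v\<in>S. (g1 \<and> v \<noteq> p1, g2 \<and> v \<noteq> p2, g3 \<and> v \<noteq> p3) = f} = mm (g1,g2,g3) f (card S)"
proof -
  let ?t = "\<lambda>v. (g1 \<and> v \<noteq> p1, g2 \<and> v \<noteq> p2, g3 \<and> v \<noteq> p3)"
  let ?T = "{v\<in>S. ?t v = f}"
  let ?D = "(g1 \<and> f = (False,g2,g3)) \<or> (g2 \<and> f = (g1,False,g3)) \<or> (g3 \<and> f = (g1,g2,False))"
  have mmv: "mm (g1,g2,g3) f (card S) = (if f = (g1,g2,g3) then card S - nt (g1,g2,g3) else if ?D then 1 else 0)"
    unfolding mm_def by simp
  show ?thesis
  proof (cases "f = (g1,g2,g3)")
    case True
    let ?P = "{p. (g1 \<and> p = p1) \<or> (g2 \<and> p = p2) \<or> (g3 \<and> p = p3)}"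
    have T: "?T = S - ?P" using True by auto
    have PS: "?P \<subseteq> S" using S by auto
    have cP: "card ?P = nt (g1,g2,g3)"
    proof -
      have "?P = (if g1 then {p1} else {}) \<union> (if g2 then {p2} else {}) \<union> (if g3 then {p3} else {})" by auto
      then show ?thesis unfolding nt_def using S by (cases g1; cases g2; cases g3) auto
    qed
    have "card ?T = card S - nt (g1,g2,g3)"
      unfolding T using card_Diff_subset[OF finite_subset[OF PS S(1)] PS] cP by simp
    then show ?thesis using mmv True by simp
  next
    case nf: False
    show ?thesis
    proof (cases ?D)
      case True
      have "?T = {p1} \<or> ?T = {p2} \<or> ?T = {p3}"
        using True S by (elim disjE) auto
      then have "card ?T = 1" by auto
      then show ?thesis using mmv nf True by simp
    next
      case False
      have "?T = {}"
      proof (rule ccontr)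
        assume "?T \<noteq> {}"
        then obtain v where v: "v \<in> S" "?t v = f" by auto
        consider "v = p1" | "v = p2" | "v = p3" | "v \<noteq> p1" "v \<noteq> p2" "v \<noteq> p3" by blast
        then show False
          by cases (use v nf False S in auto)
      qed
      then have "card ?T = 0" by (simp only: card.empty)
      then show ?thesis using mmv nf False by simp
    qed
  qed
qed


context netw begin

lemma slot_count:
  assumes xV: "x \<notin> V" and yV: "y \<notin> V" and xy: "x \<noteq> y"
  shows "card {v\<in>V. slot E v \<and> fl (ins E x y v) a = f} = mm (fl E a) f (card V - 1)"
proof -
  obtain sA where sA: "sA \<noteq> r" "chs E a = {r,sA}" using chs_a by blast
  obtain sB where sB: "sB \<noteq> r" "chs E b = {r,sB}" using chs_b by blast
  have asA: "(a,sA) \<in> E" and bsB: "(b,sB) \<in> E" using sA sB unfolding chs_def by auto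
  have sAV: "sA \<in> V" and sBV: "sB \<in> V" using asA bsB sub by auto
  have d1: "sA \<noteq> sB" using two_par[OF asA] bsB ab sA by auto
  have d2: "sA \<noteq> c" using two_par[OF asA] rcE a_ne_r c_ne_r by auto
  have d3: "sB \<noteq> c" using two_par[OF bsB] rcE b_ne_r c_ne_r by auto
  have ea: "(a,v) \<in> E \<longleftrightarrow> v = sA" if "v \<noteq> r" for v using sA that unfolding chs_def by auto
  have eb: "(b,v) \<in> E \<longleftrightarrow> v = sB" if "v \<noteq> r" for v using sB that unfolding chs_def by auto
  have ec: "(r,v) \<in> E \<longleftrightarrow> v = c" for v using rc unfolding chs_def by auto
  have "{v\<in>V. slot E v \<and> fl (ins E x y v) a = f} =
        {v\<in>V - {r}. (flA E a \<and> v \<noteq> sA, flB E a \<and> v \<noteq> sB, flC E a \<and> v \<noteq> c) = f}"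
  proof (rule set_eqI)
    fix v
    show "v \<in> {v\<in>V. slot E v \<and> fl (ins E x y v) a = f} \<longleftrightarrow>
        v \<in> {v\<in>V - {r}. (flA E a \<and> v \<noteq> sA, flB E a \<and> v \<noteq> sB, flC E a \<and> v \<noteq> c) = f}"
    proof (cases "v \<in> V \<and> v \<noteq> r")
      case True
      then have "slot E v" using slot_iff by simp
      moreover have "fl (ins E x y v) a = (flA E a \<and> v \<noteq> sA, flB E a \<and> v \<noteq> sB, flC E a \<and> v \<noteq> c)"
        using fl_ins[OF xV yV xy, of v] True ea eb ec by simp
      ultimately show ?thesis using True by simp
    next
      case False
      then show ?thesis using slot_iff by auto
    qed
  qed
  also have "card \<dots> = mm (flA E a, flB E a, flC E a) f (card (V - {r}))"
    by (rule card_slots3) (use fin sAV sBV cV sA sB c_ne_r d1 d2 d3 in auto)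
  also have "card (V - {r}) = card V - 1" using fin rV by simp
  finally show ?thesis unfolding fl_def .
qed

end


lemma card_E_chs: "finite V \<Longrightarrow> E \<subseteq> V \<times> V \<Longrightarrow> card E = (\<Sum>v\<in>V. card (chs E v))"
proof -
  assume f: "finite V" and s: "E \<subseteq> V \<times> V"
  have "E = Sigma V (chs E)" using s unfolding chs_def by auto
  moreover have "\<forall>v\<in>V. finite (chs E v)" using s f unfolding chs_def
    by (auto intro: finite_subset[of _ V])
  ultimately show ?thesis using card_SigmaI f by metis
qed

lemma card_E_pars: "finite V \<Longrightarrow> E \<subseteq> V \<times> V \<Longrightarrow> card E = (\<Sum>v\<in>V. card (pars E v))"
proof -
  assume f: "finite V" and s: "E \<subseteq> V \<times> V"
  have "E\<inverse> = Sigma V (pars E)" using s unfolding pars_def by auto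
  moreover have "\<forall>v\<in>V. finite (pars E v)" using s f unfolding pars_def
    by (auto intro: finite_subset[of _ V])
  ultimately show ?thesis using card_SigmaI f card_inverse by metis
qed

context netw begin

definition "TT = {v\<in>V - {\<rho>, r}. chs E v \<noteq> {}}"
definition "LL = {v\<in>V. chs E v = {}}"

lemma sum_pars: "(\<Sum>v\<in>V. card (pars E v)) = card V"
proof -
  have "(\<Sum>v\<in>V. card (pars E v)) = (\<Sum>v\<in>V - {\<rho>,r}. card (pars E v)) + (\<Sum>v\<in>{\<rho>,r}. card (pars E v))"
    using fin rootV rV by (metis sum.subset_diff empty_subsetI insert_subset)
  also have "(\<Sum>v\<in>V - {\<rho>,r}. card (pars E v)) = (\<Sum>v\<in>V - {\<rho>,r}. 1)"
  proof (rule sum.cong)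
    fix v assume "v \<in> V - {\<rho>,r}"
    then obtain p where "pars E v = {p}" using pars_single by auto
    then show "card (pars E v) = 1" by simp
  qed simp
  also have "(\<Sum>v\<in>{\<rho>,r}. card (pars E v)) = 2" using r_ne_root rp root_p ab by simp
  finally have eq: "(\<Sum>v\<in>V. card (pars E v)) = card (V - {\<rho>,r}) + 2" by simp
  have sV: "{\<rho>,r} \<subseteq> V" using rootV rV by simp
  have c2: "card {\<rho>,r} = 2" using r_ne_root by simp
  have "card (V - {\<rho>,r}) = card V - 2" using card_Diff_subset[OF _ sV] c2 by simp
  moreover have "card V \<ge> 2" using card_mono[OF fin sV] c2 by simp
  ultimately show ?thesis using eq by simp
qed

lemma sum_chs: "(\<Sum>v\<in>V. card (chs E v)) = 3 + 2 * card TT"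
proof -
  have V: "V = {\<rho>, r} \<union> TT \<union> LL" and d1: "{\<rho>,r} \<inter> TT = {}" and d2: "({\<rho>,r} \<union> TT) \<inter> LL = {}"
    using rootV rV root_c rc unfolding TT_def LL_def by auto
  have fT: "finite TT" and fL: "finite LL" using fin unfolding TT_def LL_def by auto
  have "(\<Sum>v\<in>V. card (chs E v)) = (\<Sum>v\<in>{\<rho>,r}. card (chs E v)) + (\<Sum>v\<in>TT. card (chs E v)) + (\<Sum>v\<in>LL. card (chs E v))"
  proof -
    let ?f = "\<lambda>v. card (chs E v)"
    have s0: "sum ?f V = sum ?f (({\<rho>,r} \<union> TT) \<union> LL)" using V by (rule arg_cong)
    have s1: "sum ?f (({\<rho>,r} \<union> TT) \<union> LL) = sum ?f ({\<rho>,r} \<union> TT) + sum ?f LL"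
      by (rule sum.union_disjoint) (use fT fL d2 in auto)
    have s2: "sum ?f ({\<rho>,r} \<union> TT) = sum ?f {\<rho>,r} + sum ?f TT"
      by (rule sum.union_disjoint) (use fT d1 in auto)
    show ?thesis using s0 s1 s2 by simp
  qed
  also have "(\<Sum>v\<in>{\<rho>,r}. card (chs E v)) = 3"
  proof -
    obtain c1 d1 where "c1 \<noteq> d1" "chs E \<rho> = {c1,d1}" using degc[OF rootV r_ne_root[symmetric]] root_c by auto
    then show ?thesis using r_ne_root rc by simp
  qed
  also have "(\<Sum>v\<in>TT. card (chs E v)) = (\<Sum>v\<in>TT. 2)"
  proof (rule sum.cong)
    fix v assume "v \<in> TT"
    then obtain c1 d1 where "c1 \<noteq> d1" "chs E v = {c1,d1}" using degc unfolding TT_def by blast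
    then show "card (chs E v) = 2" by simp
  qed simp
  also have "(\<Sum>v\<in>LL. card (chs E v)) = 0" unfolding LL_def by simp
  finally show ?thesis by simp
qed

lemma card_V_TT: "card V = 3 + 2 * card TT"
  using card_E_chs[OF fin sub] card_E_pars[OF fin sub] sum_pars sum_chs by simp

lemma card_LL: "card LL = (card V - 1) div 2"
proof -
  have V: "V = {\<rho>, r} \<union> TT \<union> LL" and d1: "{\<rho>,r} \<inter> TT = {}" and d2: "({\<rho>,r} \<union> TT) \<inter> LL = {}"
    using rootV rV root_c rc unfolding TT_def LL_def by auto
  have fT: "finite TT" and fL: "finite LL" using fin unfolding TT_def LL_def by auto
  have s0: "card V = card (({\<rho>,r} \<union> TT) \<union> LL)" using V by (rule arg_cong)
  have s1: "card (({\<rho>,r} \<union> TT) \<union> LL) = card ({\<rho>,r} \<union> TT) + card LL"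
    by (rule card_Un_disjoint) (use fT fL d2 in auto)
  have s2: "card ({\<rho>,r} \<union> TT) = card {\<rho>,r} + card TT"
    by (rule card_Un_disjoint) (use fT d1 in auto)
  have "card V = 2 + card TT + card LL"
    using s0 s1 s2 r_ne_root by simp
  then show ?thesis using card_V_TT by simp
qed

lemma odd_V: "odd (card V)" using card_V_TT by simp

lemma pars_eq: assumes "(u,v) \<in> E" "v \<noteq> r" shows "pars E v = {u}"
proof -
  have vV: "v \<in> V" using assms sub by auto
  have "v \<noteq> \<rho>" using assms root_p unfolding pars_def by auto
  then obtain p where p: "pars E v = {p}" using pars_single[OF vV] assms by auto
  moreover have "u \<in> pars E v" using assms unfolding pars_def by auto
  ultimately show ?thesis by auto
qed

lemma rem_count: "card {x. \<exists>y z. rml E x y z} = (card V - 1) div 2 - nt (fl E a)"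
proof -
  obtain sA where sA: "sA \<noteq> r" "chs E a = {r,sA}" using chs_a by blast
  obtain sB where sB: "sB \<noteq> r" "chs E b = {r,sB}" using chs_b by blast
  have asA: "(a,sA) \<in> E" and bsB: "(b,sB) \<in> E" using sA sB unfolding chs_def by auto
  have sAV: "sA \<in> V" and sBV: "sB \<in> V" using asA bsB sub by auto
  have d1: "sA \<noteq> sB" using two_par[OF asA] bsB ab sA by auto
  have d2: "sA \<noteq> c" using two_par[OF asA] rcE a_ne_r c_ne_r by auto
  have d3: "sB \<noteq> c" using two_par[OF bsB] rcE b_ne_r c_ne_r by auto
  have pA: "pars E sA = {a}" using pars_single[OF sAV] asA sA(1) root_p unfolding pars_def by (metis (mono_tags) empty_iff mem_Collect_eq singletonD)
  have pB: "pars E sB = {b}" using pars_single[OF sBV] bsB sB(1) root_p unfolding pars_def by (metis (mono_tags) empty_iff mem_Collect_eq singletonD)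
  have pC: "pars E c = {r}"
  proof -
    obtain p where p: "pars E c = {p}" using pars_single[OF cV c_ne_root c_ne_r] by auto
    moreover have "r \<in> pars E c" using rcE unfolding pars_def by auto
    ultimately show ?thesis by auto
  qed
  have R: "{x. \<exists>y z. rml E x y z} = LL - {sA,sB,c}"
  proof (rule set_eqI, rule iffI)
    fix x assume "x \<in> {x. \<exists>y z. rml E x y z}"
    then obtain y z where X: "rml E x y z" by auto
    note F = rml_facts[OF X]
    have x1: "x \<in> LL" using X F unfolding rml_def LL_def by auto
    have x2: "x \<noteq> sA"
    proof
      assume "x = sA"
      then have "y = a" using X pA unfolding rml_def by simp
      then have "{x,z} = {r,sA}" using X sA unfolding rml_def by simp
      then show False using F \<open>x = sA\<close> sA(1) by (auto simp: doubleton_eq_iff)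
    qed
    have x3: "x \<noteq> sB"
    proof
      assume "x = sB"
      then have "y = b" using X pB unfolding rml_def by simp
      then have "{x,z} = {r,sB}" using X sB unfolding rml_def by simp
      then show False using F \<open>x = sB\<close> sB(1) by (auto simp: doubleton_eq_iff)
    qed
    have x4: "x \<noteq> c"
    proof
      assume "x = c"
      then have "y = r" using X pC unfolding rml_def by simp
      then show False using F by simp
    qed
    show "x \<in> LL - {sA,sB,c}" using x1 x2 x3 x4 by simp
  next
    fix x assume xL: "x \<in> LL - {sA,sB,c}"
    then have xV: "x \<in> V" and xc: "chs E x = {}" unfolding LL_def by auto
    have xr: "x \<noteq> \<rho>" using xc root_c by auto
    have xrr: "x \<noteq> r" using xc rc by auto
    obtain y where y: "pars E x = {y}" using pars_single[OF xV xr xrr] by auto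
    have yx: "(y,x) \<in> E" using y unfolding pars_def by auto
    have yV: "y \<in> V" using yx sub by auto
    have yr: "y \<noteq> r" using yx rc xL unfolding chs_def by auto
    have "chs E y \<noteq> {}" using yx unfolding chs_def by auto
    then obtain c1 d1 where cd: "c1 \<noteq> d1" "chs E y = {c1,d1}" using degc[OF yV yr] by auto
    have "x = c1 \<or> x = d1" using cd yx unfolding chs_def by auto
    then obtain z where z: "z \<noteq> x" "chs E y = {x,z}"
    proof
      assume "x = c1" then show thesis using that[of d1] cd by auto
    next
      assume "x = d1" then show thesis using that[of c1] cd by auto
    qed
    have yz: "(y,z) \<in> E" using z unfolding chs_def by auto
    have zV: "z \<in> V" using yz sub by auto
    have zr: "z \<noteq> r"
    proof
      assume "z = r"
      then have "y = a \<or> y = b" using yz par_r by simp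
      then show False
      proof
        assume "y = a" then have "{x,r} = {r,sA}" using z sA \<open>z = r\<close> by simp
        then show False using xL by (auto simp: doubleton_eq_iff)
      next
        assume "y = b" then have "{x,r} = {r,sB}" using z sB \<open>z = r\<close> by simp
        then show False using xL by (auto simp: doubleton_eq_iff)
      qed
    qed
    have zrho: "z \<noteq> \<rho>" using yz root_p unfolding pars_def by auto
    have pz: "pars E z = {y}" using pars_eq[OF yz zr] .
    have "rml E x y z" unfolding rml_def using z xc y pz by simp
    then show "x \<in> {x. \<exists>y z. rml E x y z}" by auto
  qed
  have fL: "finite LL" using fin unfolding LL_def by auto
  have I: "LL \<inter> {sA,sB,c} = {s. (flA E a \<and> s = sA) \<or> (flB E a \<and> s = sB) \<or> (flC E a \<and> s = c)}"
  proof -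
    have "flA E a \<longleftrightarrow> chs E sA = {}" using flA_iff sA unfolding chs_def by auto
    moreover have "flB E a \<longleftrightarrow> chs E sB = {}" using flB_iff sB unfolding chs_def by auto
    moreover have "flC E a \<longleftrightarrow> chs E c = {}" using flC_iff rc unfolding chs_def by auto
    ultimately show ?thesis using sAV sBV cV unfolding LL_def by auto
  qed
  have cI: "card (LL \<inter> {sA,sB,c}) = nt (fl E a)"
  proof -
    have "{s. (flA E a \<and> s = sA) \<or> (flB E a \<and> s = sB) \<or> (flC E a \<and> s = c)} =
      (if flA E a then {sA} else {}) \<union> (if flB E a then {sB} else {}) \<union> (if flC E a then {c} else {})" by auto
    then show ?thesis unfolding I nt_def fl_def using d1 d2 d3
      by (cases "flA E a"; cases "flB E a"; cases "flC E a") auto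
  qed
  have "card (LL - {sA,sB,c}) = card LL - card (LL \<inter> {sA,sB,c})"
    by (rule card_Diff_subset_Int) simp
  then show ?thesis using R cI card_LL by simp
qed

end


definition par :: "(nat \<times> nat) set \<Rightarrow> nat \<Rightarrow> nat" where "par E x = the_elem (pars E x)"
definition sib :: "(nat \<times> nat) set \<Rightarrow> nat \<Rightarrow> nat" where "sib E x = the_elem (chs E (par E x) - {x})"

definition CC :: "nat set \<Rightarrow> bool \<times> bool \<times> bool \<Rightarrow> ((nat \<times> nat) set \<times> nat) set" where
  "CC W f = {(E,a). net W E a \<and> fl E a = f}"
definition NS :: "nat set \<Rightarrow> ((nat \<times> nat) set \<times> nat) set" where
  "NS W = {(E,a). net W E a}"

definition LHS where "LHS W f = Sigma (CC W f) (\<lambda>(E,a). {x. \<exists>y z. rml E x y z})"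
definition RHS where "RHS W f = (SIGMA x:W. SIGMA y:W-{x}. SIGMA N:NS (W - {x,y}).
    {v\<in>W - {x,y}. slot (fst N) v \<and> fl (ins (fst N) x y v) (snd N) = f})"

definition FF where "FF = (\<lambda>((E,a),x). (x, (par E x, ((rem E x (par E x) (sib E x), a), sib E x))))"
definition GG where "GG = (\<lambda>(x,(y,((E,a),v))). ((ins E x y v, a), x))"

lemma rml_par_sib: assumes "rml E x y z" shows "par E x = y \<and> sib E x = z"
proof -
  have p: "pars E x = {y}" and c: "chs E y = {x,z}" "x \<noteq> z" using assms unfolding rml_def by auto
  have 1: "par E x = y" using p by (simp add: par_def)
  have "chs E y - {x} = {z}" using c by auto
  then show ?thesis using 1 by (simp add: sib_def)
qed

lemma NS_sub: "NS W \<subseteq> Pow (W \<times> W) \<times> W"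
proof
  fix N assume "N \<in> NS W"
  then obtain E a where N: "N = (E,a)" "net W E a" unfolding NS_def by auto
  then obtain \<rho> r b c h where "netw W E a \<rho> r b c h" using net_netw by blast
  then interpret netw W E a \<rho> r b c h .
  show "N \<in> Pow (W \<times> W) \<times> W" using N sub aV by auto
qed

lemma finite_NS: "finite W \<Longrightarrow> finite (NS W)"
  using NS_sub by (rule finite_subset) auto

lemma CC_sub: "CC W f \<subseteq> NS W" unfolding CC_def NS_def by auto

lemma finite_CC: "finite W \<Longrightarrow> finite (CC W f)"
  by (rule finite_subset[OF CC_sub finite_NS])

lemma bij_FF: "bij_betw FF (LHS W f) (RHS W f)"
proof (rule bij_betw_byWitness[where f' = GG])
  show "\<forall>t\<in>LHS W f. GG (FF t) = t"
  proof
    fix t assume "t \<in> LHS W f"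
    then obtain E a x y z where t: "t = ((E,a),x)" "net W E a" "fl E a = f" "rml E x y z"
      unfolding LHS_def CC_def by auto
    then obtain \<rho> r b c h where "netw W E a \<rho> r b c h" using net_netw by blast
    then interpret netw W E a \<rho> r b c h .
    show "GG (FF t) = t" using t rml_par_sib[OF t(4)] rem_netw(2)[OF t(4)] unfolding FF_def GG_def by simp
  qed
  show "\<forall>s\<in>RHS W f. FF (GG s) = s"
  proof
    fix s assume "s \<in> RHS W f"
    obtain x y N v where sd: "s = (x,(y,(N,v)))" by (cases s) auto
    obtain E a where Nd: "N = (E,a)" by (cases N) auto
    have s: "s = (x,(y,((E,a),v)))" "x \<in> W" "y \<in> W" "x \<noteq> y" "net (W - {x,y}) E a"
      "v \<in> W - {x,y}"
      using \<open>s \<in> RHS W f\<close> unfolding sd Nd RHS_def NS_def by auto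
    then obtain \<rho> r b c h where "netw (W - {x,y}) E a \<rho> r b c h" using net_netw by blast
    then interpret netw "W - {x,y}" E a \<rho> r b c h .
    have X: "rml (ins E x y v) x y v" by (rule rml_ins[OF sub]) (use s in auto)
    show "FF (GG s) = s" using s rml_par_sib[OF X] rem_ins[OF sub, of x y v] unfolding FF_def GG_def by simp
  qed
  show "FF ` LHS W f \<subseteq> RHS W f"
  proof
    fix s assume "s \<in> FF ` LHS W f"
    then obtain E a x y z where t: "s = FF ((E,a),x)" "net W E a" "fl E a = f" "rml E x y z"
      unfolding LHS_def CC_def by auto
    then obtain \<rho> r b c h where "netw W E a \<rho> r b c h" using net_netw by blast
    then interpret netw W E a \<rho> r b c h .
    note F = rml_facts[OF t(4)]
    have s: "s = (x, (y, ((rem E x y z, a), z)))" using t rml_par_sib[OF t(4)] unfolding FF_def by simp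
    interpret R: netw "W - {x,y}" "rem E x y z" a "if y = \<rho> then z else \<rho>" r b "if c = y then z else c" h
      by (rule rem_netw(1)[OF t(4)])
    have "net (W - {x,y}) (rem E x y z) a" by (rule netw_net[OF R.netw_axioms])
    moreover have "slot (rem E x y z) z" using R.slot_iff rem_netw(3)[OF t(4)] F by simp
    moreover have "fl (ins (rem E x y z) x y z) a = f" using rem_netw(2)[OF t(4)] t by simp
    ultimately show "s \<in> RHS W f" unfolding s RHS_def NS_def using F by auto
  qed
  show "GG ` RHS W f \<subseteq> LHS W f"
  proof
    fix t assume "t \<in> GG ` RHS W f"
    then obtain s0 where s0: "s0 \<in> RHS W f" "t = GG s0" by auto
    obtain x y N v where sd: "s0 = (x,(y,(N,v)))" by (cases s0) auto
    obtain E a where Nd: "N = (E,a)" by (cases N) auto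
    have s: "t = GG (x,(y,((E,a),v)))" "x \<in> W" "y \<in> W" "x \<noteq> y" "net (W - {x,y}) E a"
      "v \<in> W - {x,y}" "slot E v" "fl (ins E x y v) a = f"
      using s0 unfolding sd Nd RHS_def NS_def by auto
    then obtain \<rho> r b c h where "netw (W - {x,y}) E a \<rho> r b c h" using net_netw by blast
    then interpret netw "W - {x,y}" E a \<rho> r b c h .
    have vr: "v \<noteq> r" using slot_iff s by auto
    have N: "netw (insert x (insert y (W - {x,y}))) (ins E x y v) a (if v = \<rho> then y else \<rho>) r b (if c = v then y else c)
     (\<lambda>u. if u = y then 2*h v+1 else if u = x then 2*h v+2 else 2*h u+2)"
      by (rule ins_netw[OF netw_axioms]) (use s vr in auto)
    have W: "insert x (insert y (W - {x,y})) = W" using s by auto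
    have "net W (ins E x y v) a" using netw_net[OF N] W by simp
    moreover have X: "rml (ins E x y v) x y v" by (rule rml_ins[OF sub]) (use s in auto)
    ultimately show "t \<in> LHS W f" using s unfolding GG_def LHS_def CC_def by auto
  qed
qed

lemma card_LHS:
  assumes "finite W"
  shows "card (LHS W f) = card (CC W f) * ((card W - 1) div 2 - nt f)"
proof -
  have "card (LHS W f) = (\<Sum>N\<in>CC W f. card ((\<lambda>(E,a). {x. \<exists>y z. rml E x y z}) N))"
    unfolding LHS_def
  proof (rule card_SigmaI)
    show "finite (CC W f)" using finite_CC[OF assms] .
    show "\<forall>N\<in>CC W f. finite ((\<lambda>(E,a). {x. \<exists>y z. rml E x y z}) N)"
    proof
      fix N assume "N \<in> CC W f"
      then obtain E a where N: "N = (E,a)" "net W E a" unfolding CC_def by auto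
      then obtain \<rho> r b c h where "netw W E a \<rho> r b c h" using net_netw by blast
      then interpret netw W E a \<rho> r b c h .
      have "{x. \<exists>y z. rml E x y z} \<subseteq> W" using rml_facts by blast
      then show "finite ((\<lambda>(E,a). {x. \<exists>y z. rml E x y z}) N)" using N fin finite_subset by auto
    qed
  qed
  also have "\<dots> = (\<Sum>N\<in>CC W f. (card W - 1) div 2 - nt f)"
  proof (rule sum.cong)
    fix N assume "N \<in> CC W f"
    then obtain E a where N: "N = (E,a)" "net W E a" "fl E a = f" unfolding CC_def by auto
    then obtain \<rho> r b c h where "netw W E a \<rho> r b c h" using net_netw by blast
    then interpret netw W E a \<rho> r b c h .
    show "card ((\<lambda>(E,a). {x. \<exists>y z. rml E x y z}) N) = (card W - 1) div 2 - nt f"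
      using rem_count N by simp
  qed simp
  finally show ?thesis by simp
qed

lemma sum_NS:
  assumes "finite V"
  shows "(\<Sum>N\<in>NS V. mm (fl (fst N) (snd N)) f k) = (\<Sum>g\<in>UNIV. card (CC V g) * mm g f k)"
proof -
  have "(\<Sum>N\<in>NS V. mm (fl (fst N) (snd N)) f k) =
     (\<Sum>g\<in>UNIV. \<Sum>N\<in>{N\<in>NS V. fl (fst N) (snd N) = g}. mm (fl (fst N) (snd N)) f k)"
    by (rule sum.group[symmetric]) (use finite_NS[OF assms] in auto)
  also have "\<dots> = (\<Sum>g\<in>UNIV. card (CC V g) * mm g f k)"
  proof (rule sum.cong)
    fix g :: "bool \<times> bool \<times> bool"
    have "{N\<in>NS V. fl (fst N) (snd N) = g} = CC V g" unfolding NS_def CC_def by auto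
    moreover have "(\<Sum>N\<in>CC V g. mm (fl (fst N) (snd N)) f k) = (\<Sum>N\<in>CC V g. mm g f k)"
      by (rule sum.cong) (auto simp: CC_def)
    ultimately show "(\<Sum>N\<in>{N\<in>NS V. fl (fst N) (snd N) = g}. mm (fl (fst N) (snd N)) f k) = card (CC V g) * mm g f k"
      by simp
  qed simp
  finally show ?thesis .
qed

lemma card_RHS:
  assumes "finite W"
  shows "card (RHS W f) = (\<Sum>x\<in>W. \<Sum>y\<in>W-{x}. \<Sum>g\<in>UNIV. card (CC (W-{x,y}) g) * mm g f (card W - 3))"
proof -
  let ?S = "\<lambda>x y N. {v\<in>W - {x,y}. slot (fst N) v \<and> fl (ins (fst N) x y v) (snd N) = f}"
  have fin1: "finite (?S x y N)" for x y N using assms by auto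
  have inner: "card (?S x y N) = mm (fl (fst N) (snd N)) f (card W - 3)"
    if H: "x \<in> W" "y \<in> W - {x}" "N \<in> NS (W - {x,y})" for x y N
  proof -
    obtain E a where N: "N = (E,a)" "net (W - {x,y}) E a" using H(3) unfolding NS_def by auto
    then obtain \<rho> r b c h where "netw (W - {x,y}) E a \<rho> r b c h" using net_netw by blast
    then interpret netw "W - {x,y}" E a \<rho> r b c h .
    have "card (?S x y N) = mm (fl E a) f (card (W - {x,y}) - 1)"
      using slot_count[of x y f] H N by simp
    moreover have "card (W - {x,y}) = card W - 2" using H assms by (simp add: card_Diff_subset)
    ultimately show ?thesis using N by simp
  qed
  have "card (RHS W f) = (\<Sum>x\<in>W. card (SIGMA y:W-{x}. SIGMA N:NS (W - {x,y}). ?S x y N))"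
    unfolding RHS_def by (rule card_SigmaI) (use assms finite_NS in auto)
  also have "\<dots> = (\<Sum>x\<in>W. \<Sum>y\<in>W-{x}. card (SIGMA N:NS (W - {x,y}). ?S x y N))"
    by (rule sum.cong) (simp, rule card_SigmaI, use assms finite_NS in auto)
  also have "\<dots> = (\<Sum>x\<in>W. \<Sum>y\<in>W-{x}. \<Sum>N\<in>NS (W - {x,y}). card (?S x y N))"
    by (rule sum.cong, simp, rule sum.cong, simp, rule card_SigmaI) (use assms finite_NS in auto)
  also have "\<dots> = (\<Sum>x\<in>W. \<Sum>y\<in>W-{x}. \<Sum>N\<in>NS (W - {x,y}). mm (fl (fst N) (snd N)) f (card W - 3))"
    by (rule sum.cong, simp, rule sum.cong, simp, rule sum.cong, simp) (use inner in auto)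
  also have "\<dots> = (\<Sum>x\<in>W. \<Sum>y\<in>W-{x}. \<Sum>g\<in>UNIV. card (CC (W-{x,y}) g) * mm g f (card W - 3))"
    by (rule sum.cong, simp, rule sum.cong, simp, rule sum_NS) (use assms in auto)
  finally show ?thesis .
qed

theorem recur:
  assumes "finite W"
  shows "card (CC W f) * ((card W - 1) div 2 - nt f) =
     (\<Sum>x\<in>W. \<Sum>y\<in>W-{x}. \<Sum>g\<in>UNIV. card (CC (W-{x,y}) g) * mm g f (card W - 3))"
  using card_LHS[OF assms] card_RHS[OF assms] bij_betw_same_card[OF bij_FF] by simp


definition Eof :: "nat \<Rightarrow> nat \<Rightarrow> nat \<Rightarrow> nat \<Rightarrow> nat \<Rightarrow> nat \<Rightarrow> nat \<Rightarrow> (nat \<times> nat) set" where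
  "Eof p a b r s t c = {(p,a),(p,b),(a,s),(a,r),(b,t),(b,r),(r,c)}"

context netw begin

lemma card_ge7: "card V \<ge> 7"
proof -
  have "{a,b} \<subseteq> TT" unfolding TT_def using aV bV a_ne_root b_ne_root a_ne_r b_ne_r ar br
    unfolding chs_def by auto
  then have "card TT \<ge> 2" using card_mono[of TT "{a,b}"] ab fin unfolding TT_def by auto
  then show ?thesis using card_V_TT by simp
qed

lemma seven:
  assumes c7: "card V = 7"
  shows "\<exists>sA sB. fl E a = (True,True,True) \<and> E = Eof \<rho> a b r sA sB c \<and> V = {\<rho>,a,b,r,sA,sB,c} \<and>
     distinct [\<rho>,a,b,r,sA,sB,c]"
proof -
  obtain sA where sA: "sA \<noteq> r" "chs E a = {r,sA}" using chs_a by blast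
  obtain sB where sB: "sB \<noteq> r" "chs E b = {r,sB}" using chs_b by blast
  have asA: "(a,sA) \<in> E" and bsB: "(b,sB) \<in> E" using sA sB unfolding chs_def by auto
  have sAV: "sA \<in> V" and sBV: "sB \<in> V" using asA bsB sub by auto
  have d1: "sA \<noteq> sB" using two_par[OF asA] bsB ab sA by auto
  have d2: "sA \<noteq> c" using two_par[OF asA] rcE a_ne_r c_ne_r by auto
  have d3: "sB \<noteq> c" using two_par[OF bsB] rcE b_ne_r c_ne_r by auto
  have pA: "pars E sA = {a}" by (rule pars_eq[OF asA sA(1)])
  have pB: "pars E sB = {b}" by (rule pars_eq[OF bsB sB(1)])
  have pC: "pars E c = {r}" by (rule pars_eq[OF rcE c_ne_r])
  have d4: "sA \<noteq> \<rho>" "sB \<noteq> \<rho>" using pA pB root_p by auto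
  have d5: "sA \<noteq> a" "sB \<noteq> b" using rank[OF asA] rank[OF bsB] by auto
  have d6: "sA \<noteq> b" "sB \<noteq> a" using asA bsB nab nba by auto
  have dist: "distinct [\<rho>,a,b,r,sA,sB,c]"
    using d1 d2 d3 d4 d5 d6 sA(1) sB(1) a_ne_root b_ne_root r_ne_root c_ne_root ab a_ne_r b_ne_r c_ne_r c_ne_a c_ne_b
    by auto
  have sub7: "{\<rho>,a,b,r,sA,sB,c} \<subseteq> V" using rootV aV bV rV sAV sBV cV by auto
  have "card {\<rho>,a,b,r,sA,sB,c} = 7" using dist by (simp add: distinct_card[of "[\<rho>,a,b,r,sA,sB,c]", simplified])
  then have Veq: "V = {\<rho>,a,b,r,sA,sB,c}" using card_subset_eq[OF fin sub7] c7 by simp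
  have cT: "card TT = 2" using card_V_TT c7 by simp
  have abT: "{a,b} \<subseteq> TT" unfolding TT_def using aV bV a_ne_root b_ne_root a_ne_r b_ne_r ar br
    unfolding chs_def by auto
  have fT: "finite TT" using fin unfolding TT_def by auto
  have Teq: "TT = {a,b}" using card_subset_eq[OF fT abT] cT ab by simp
  have leaf: "chs E w = {}" if "w \<in> {sA,sB,c}" for w
  proof (rule ccontr)
    assume "chs E w \<noteq> {}"
    moreover have "w \<in> V - {\<rho>,r}" using that sAV sBV cV d4 sA(1) sB(1) c_ne_root c_ne_r by auto
    ultimately have "w \<in> TT" unfolding TT_def by auto
    then show False using Teq that d5 d6 c_ne_a c_ne_b by auto
  qed
  have chr: "chs E \<rho> = {a,b}"
  proof -
    obtain c1 d1 where cd: "c1 \<noteq> d1" "chs E \<rho> = {c1,d1}" using degc[OF rootV r_ne_root[symmetric]] root_c by auto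
    have "chs E \<rho> \<subseteq> {a,b}"
    proof
      fix w assume "w \<in> chs E \<rho>"
      then have w: "(\<rho>,w) \<in> E" unfolding chs_def by auto
      then have "w \<in> V" using sub by auto
      moreover have "w \<noteq> \<rho>" using rank[OF w] by auto
      moreover have "w \<noteq> sA" "w \<noteq> sB" "w \<noteq> c" using w pA pB pC a_ne_root b_ne_root r_ne_root
        unfolding pars_def by auto
      moreover have "w \<noteq> r" using w par_r a_ne_root b_ne_root by auto
      ultimately show "w \<in> {a,b}" using Veq by auto
    qed
    then show ?thesis using cd by (auto simp: doubleton_eq_iff)
  qed
  have Eeq: "E = Eof \<rho> a b r sA sB c"
  proof (rule set_eqI)
    fix e :: "nat \<times> nat"
    obtain u w where e: "e = (u,w)" by (cases e)
    have "(u,w) \<in> E \<longleftrightarrow> w \<in> chs E u" unfolding chs_def by simp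
    moreover have "u \<in> V" if "(u,w) \<in> E" using that sub by auto
    ultimately have "(u,w) \<in> E \<longleftrightarrow> (u = \<rho> \<and> w \<in> chs E \<rho>) \<or> (u = a \<and> w \<in> chs E a) \<or> (u = b \<and> w \<in> chs E b)
       \<or> (u = r \<and> w \<in> chs E r) \<or> (u \<in> {sA,sB,c} \<and> w \<in> chs E u)" using Veq by blast
    also have "\<dots> \<longleftrightarrow> (u,w) \<in> Eof \<rho> a b r sA sB c"
      unfolding chr sA(2) sB(2) rc using leaf unfolding Eof_def by auto
    finally show "e \<in> E \<longleftrightarrow> e \<in> Eof \<rho> a b r sA sB c" using e by simp
  qed
  have fl: "fl E a = (True,True,True)"
  proof -
    have "flA E a" using flA_iff leaf sA unfolding chs_def by auto
    moreover have "flB E a" using flB_iff leaf sB unfolding chs_def by auto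
    moreover have "flC E a" using flC_iff leaf rc unfolding chs_def by auto
    ultimately show ?thesis unfolding fl_def by simp
  qed
  show ?thesis using fl Eeq Veq dist by blast
qed

end

lemma Eof_netw:
  assumes d: "distinct [p,a,b,r,s,t,c]"
  shows "netw {p,a,b,r,s,t,c} (Eof p a b r s t c) a p r b c
     (\<lambda>u. if u = p then 0 else if u = a \<or> u = b then 1 else if u = c then 3 else 2)"
proof -
  let ?E = "Eof p a b r s t c"
  let ?h = "\<lambda>u. if u = p then 0 else if u = a \<or> u = b then 1 else if u = c then 3 else (2::nat)"
  have rk: "?h u < ?h w" if "(u,w) \<in> ?E" for u w using that d by (auto simp: Eof_def)
  have tr: "?h u < ?h w" if "(u,w) \<in> ?E\<^sup>+" for u w
    using that
  proof (induction rule: trancl_induct)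
    case (base y) then show ?case by (rule rk)
  next
    case (step y z) then show ?case using rk[OF step(2)] by linarith
  qed
  have pp: "pars ?E p = {}" "pars ?E a = {p}" "pars ?E b = {p}" "pars ?E r = {a,b}" "pars ?E s = {a}"
    "pars ?E t = {b}" "pars ?E c = {r}"
    using d unfolding pars_def Eof_def by auto
  have cc: "chs ?E p = {a,b}" "chs ?E a = {s,r}" "chs ?E b = {t,r}" "chs ?E r = {c}" "chs ?E s = {}"
    "chs ?E t = {}" "chs ?E c = {}"
    using d unfolding chs_def Eof_def by auto
  show ?thesis
  proof (rule netw.intro)
    show "finite {p,a,b,r,s,t,c}" by simp
    show "?E \<subseteq> {p,a,b,r,s,t,c} \<times> {p,a,b,r,s,t,c}" unfolding Eof_def by auto
    show "?h u < ?h w" if "(u,w) \<in> ?E" for u w using rk that .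
    show "p \<in> {p,a,b,r,s,t,c}" by simp
    show "pars ?E p = {}" by (rule pp(1))
    show "chs ?E p \<noteq> {}" using cc by simp
    show "v = p" if "v \<in> {p,a,b,r,s,t,c}" "pars ?E v = {}" for v using that pp by auto
    show "a \<noteq> b" using d by simp
    show "pars ?E r = {a,b}" by (rule pp(4))
    show "chs ?E r = {c}" by (rule cc(4))
    show "(a,b) \<notin> ?E\<^sup>+" using tr[of a b] d by auto
    show "(b,a) \<notin> ?E\<^sup>+" using tr[of b a] d by auto
    show "pars ?E v = {} \<or> (\<exists>q. pars ?E v = {q})" if "v \<in> {p,a,b,r,s,t,c}" "v \<noteq> r" for v
      using that pp by auto
    show "chs ?E v = {} \<or> (\<exists>c d. c \<noteq> d \<and> chs ?E v = {c,d})" if "v \<in> {p,a,b,r,s,t,c}" "v \<noteq> r" for v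
    proof -
      have "v = p \<or> v = a \<or> v = b \<or> v = s \<or> v = t \<or> v = c" using that by auto
      then show ?thesis
      proof (elim disjE)
        assume "v = p" then show ?thesis using cc d by (intro disjI2 two_el[of a b]) auto
      next
        assume "v = a" then show ?thesis using cc d by (intro disjI2 two_el[of s r]) auto
      next
        assume "v = b" then show ?thesis using cc d by (intro disjI2 two_el[of t r]) auto
      qed (use cc in auto)
    qed
  qed
qed

lemma card7:
  assumes fW: "finite W" and c7: "card W = 7"
  shows "card (CC W (True,True,True)) = 5040"
proof -
  let ?L = "{xs. length xs = 7 \<and> distinct xs \<and> set xs \<subseteq> W}"
  let ?phi = "\<lambda>xs. (Eof (xs!0) (xs!1) (xs!2) (xs!3) (xs!4) (xs!5) (xs!6), xs!1)"
  have cL: "card ?L = 5040"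
  proof -
    have "{1..7::nat} = {1,2,3,4,5,6,7}" by auto
    then have "\<Prod>{1..7::nat} = 5040" by simp
    then show ?thesis using card_lists_distinct_length_eq[OF fW, of 7] c7 by simp
  qed
  have L7: "\<exists>p a b r s t c. xs = [p,a,b,r,s,t,c]" if "length xs = 7" for xs :: "nat list"
    using that by (simp add: numeral_eq_Suc length_Suc_conv) blast
  have setL: "set xs = W" if "xs \<in> ?L" for xs
  proof -
    have "card (set xs) = 7" using that distinct_card[of xs] by simp
    then show ?thesis using card_subset_eq[OF fW, of "set xs"] that c7 by simp
  qed
  have img: "?phi ` ?L = CC W (True,True,True)"
  proof
    show "?phi ` ?L \<subseteq> CC W (True,True,True)"
    proof
      fix N assume "N \<in> ?phi ` ?L"
      then obtain xs where xs: "xs \<in> ?L" "N = ?phi xs" by auto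
      obtain p a b r s t c where l: "xs = [p,a,b,r,s,t,c]" using L7[of xs] xs by blast
      have d: "distinct [p,a,b,r,s,t,c]" using xs l by simp
      have W: "W = {p,a,b,r,s,t,c}" using setL[OF xs(1)] l by simp
      interpret netw "{p,a,b,r,s,t,c}" "Eof p a b r s t c" a p r b c
        "\<lambda>u. if u = p then 0 else if u = a \<or> u = b then 1 else if u = c then 3 else 2"
        by (rule Eof_netw[OF d])
      have "net W (Eof p a b r s t c) a" using netw_net[OF netw_axioms] W by simp
      moreover have "fl (Eof p a b r s t c) a = (True,True,True)" using seven W c7 by blast
      ultimately show "N \<in> CC W (True,True,True)" using xs l unfolding CC_def by simp
    qed
    show "CC W (True,True,True) \<subseteq> ?phi ` ?L"
    proof
      fix N assume "N \<in> CC W (True,True,True)"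
      then obtain E a where N: "N = (E,a)" "net W E a" unfolding CC_def by auto
      then obtain \<rho> r b c h where "netw W E a \<rho> r b c h" using net_netw by blast
      then interpret netw W E a \<rho> r b c h .
      obtain sA sB where S: "E = Eof \<rho> a b r sA sB c" "W = {\<rho>,a,b,r,sA,sB,c}" "distinct [\<rho>,a,b,r,sA,sB,c]"
        using seven c7 by blast
      have "[\<rho>,a,b,r,sA,sB,c] \<in> ?L" using S by auto
      moreover have "N = ?phi [\<rho>,a,b,r,sA,sB,c]" using N S by simp
      ultimately show "N \<in> ?phi ` ?L" by blast
    qed
  qed
  have inj: "inj_on ?phi ?L"
  proof (rule inj_onI)
    fix xs ys assume xs: "xs \<in> ?L" and ys: "ys \<in> ?L" and eq: "?phi xs = ?phi ys"
    obtain p a b r s t c where l: "xs = [p,a,b,r,s,t,c]" using L7[of xs] xs by blast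
    obtain p' a' b' r' s' t' c' where l': "ys = [p',a',b',r',s',t',c']" using L7[of ys] ys by blast
    have d: "distinct [p,a,b,r,s,t,c]" using xs l by simp
    have d': "distinct [p',a',b',r',s',t',c']" using ys l' by simp
    have W: "W = {p,a,b,r,s,t,c}" using setL[OF xs] l by simp
    have W': "W = {p',a',b',r',s',t',c'}" using setL[OF ys] l' by simp
    have aa: "a' = a" and EE: "Eof p' a b' r' s' t' c' = Eof p a b r s t c" using eq l l' by auto
    interpret I1: netw "{p,a,b,r,s,t,c}" "Eof p a b r s t c" a p r b c
        "\<lambda>u. if u = p then 0 else if u = a \<or> u = b then 1 else if u = c then 3 else 2"
      by (rule Eof_netw[OF d])
    interpret I2: netw "{p',a,b',r',s',t',c'}" "Eof p a b r s t c" a p' r' b' c'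
        "\<lambda>u. if u = p' then 0 else if u = a \<or> u = b' then 1 else if u = c' then 3 else 2"
    proof -
      have d'': "distinct [p',a,b',r',s',t',c']" using d' aa by simp
      show "netw {p',a,b',r',s',t',c'} (Eof p a b r s t c) a p' r' b' c'
        (\<lambda>u. if u = p' then 0 else if u = a \<or> u = b' then 1 else if u = c' then 3 else 2)"
        using Eof_netw[OF d''] EE by simp
    qed
    have "p' \<in> {p,a,b,r,s,t,c}" using W W' by auto
    then have "p' = p" using I1.root_u[of p'] I2.root_p by simp
    moreover have "r' = r \<and> b' = b" using I1.ret_ab[OF I2.ab I2.rp] .
    moreover have "c' = c" using I2.rc I1.rc \<open>r' = r \<and> b' = b\<close> by simp
    moreover have "s' = s"
    proof -
      have "chs (Eof p a b r s t c) a = {s,r}" using d unfolding chs_def Eof_def by auto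
      moreover have "chs (Eof p' a b' r' s' t' c') a = {s',r'}" using d' aa unfolding chs_def Eof_def by auto
      ultimately have "{s,r} = {s',r}" using EE \<open>r' = r \<and> b' = b\<close> by simp
      then show ?thesis using d d' aa \<open>r' = r \<and> b' = b\<close> by (auto simp: doubleton_eq_iff)
    qed
    moreover have "t' = t"
    proof -
      have "chs (Eof p a b r s t c) b = {t,r}" using d unfolding chs_def Eof_def by auto
      moreover have "chs (Eof p' a b' r' s' t' c') b' = {t',r'}" using d' aa unfolding chs_def Eof_def by auto
      ultimately have "{t,r} = {t',r}" using EE \<open>r' = r \<and> b' = b\<close> by simp
      then show ?thesis using d d' aa \<open>r' = r \<and> b' = b\<close> by (auto simp: doubleton_eq_iff)
    qed
    ultimately show "xs = ys" using l l' aa by simp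
  qed
  have "card (CC W (True,True,True)) = card ?L" using card_image[OF inj] img by simp
  then show ?thesis using cL by simp
qed

lemma CC_small:
  assumes "finite W" "card W < 7 \<or> even (card W)"
  shows "CC W f = {}"
proof (rule ccontr)
  assume "CC W f \<noteq> {}"
  then obtain E a where "net W E a" unfolding CC_def by auto
  then obtain \<rho> r b c h where "netw W E a \<rho> r b c h" using net_netw by blast
  then interpret netw W E a \<rho> r b c h .
  show False using card_ge7 odd_V assms by auto
qed

lemma CC_7:
  assumes "finite W" "card W = 7" "f \<noteq> (True,True,True)"
  shows "CC W f = {}"
proof (rule ccontr)
  assume "CC W f \<noteq> {}"
  then obtain E a where "net W E a" "fl E a = f" unfolding CC_def by auto
  then obtain \<rho> r b c h where "netw W E a \<rho> r b c h" using net_netw by blast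
  then interpret netw W E a \<rho> r b c h .
  show False using seven assms \<open>fl E a = f\<close> by auto
qed


fun cc :: "nat \<Rightarrow> real" where
  "cc 0 = 1"
| "cc (Suc m) = cc m * (2 * real m + 3) / (real m + 1)"

definition ee :: "nat \<Rightarrow> nat \<Rightarrow> real" where
  "ee j k = (if j = 0 then cc (k-3) else if j = 1 then cc (k-2) - cc (k-3) - 2^(k-2)
     else if j = 2 then 2 * cc (k-1) - 4 * cc (k-2) + cc (k-3) - 2^(k-1)
     else 4 * cc k - 12 * cc (k-1) + 9 * cc (k-2) - cc (k-3) - 3 * 2^(k-2))"

lemma cc_pos: "cc m > 0" by (induction m) auto

lemma ee_rec:
  assumes k: "k \<ge> 4" and j: "j \<le> 3"
  shows "ee j k * (real k + real j - 3) = ee j (k-1) * (2 * real k + real j - 5) + real j * ee (j-1) (k-1)"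
proof -
  obtain m where m: "k = m + 4" using k by (metis add.commute le_Suc_ex)
  define X where "X = cc m / ((real m + 1) * (real m + 2) * (real m + 3) * (real m + 4))"
  have mp: "real m + 1 > 0" "real m + 2 > 0" "real m + 3 > 0" "real m + 4 > 0" by simp_all
  have D0: "(real m + 1) * (real m + 2) * (real m + 3) * (real m + 4) \<noteq> 0" using mp by simp
  have c0: "cc m = X * ((real m + 1) * (real m + 2) * (real m + 3) * (real m + 4))"
    unfolding X_def using D0 by simp
  have st: "cc (n+1) * (real n + 1) = cc n * (2 * real n + 3)" for n
  proof -
    have "real n + 1 \<noteq> 0" by simp
    then show ?thesis by simp
  qed
  have e2: "m + 1 + 1 = m + 2" and e3: "m + 2 + 1 = m + 3" and e4: "m + 3 + 1 = m + 4" by simp_all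
  have c1: "cc (m+1) = X * ((2 * real m + 3) * (real m + 2) * (real m + 3) * (real m + 4))"
  proof -
    have "cc (m+1) * (real m + 1) = X * ((2 * real m + 3) * (real m + 2) * (real m + 3) * (real m + 4)) * (real m + 1)"
      using st[of m] c0 by (simp del: cc.simps add: algebra_simps)
    then show ?thesis using mp(1) by (simp del: cc.simps)
  qed
  have c2: "cc (m+2) = X * ((2 * real m + 3) * (2 * real m + 5) * (real m + 3) * (real m + 4))"
  proof -
    have "cc (m+2) * (real m + 2) = X * ((2 * real m + 3) * (2 * real m + 5) * (real m + 3) * (real m + 4)) * (real m + 2)"
      using st[of "m+1", unfolded e2] c1 by (simp del: cc.simps add: algebra_simps)
    then show ?thesis using mp(2) by (simp del: cc.simps)
  qed
  have c3: "cc (m+3) = X * ((2 * real m + 3) * (2 * real m + 5) * (2 * real m + 7) * (real m + 4))"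
  proof -
    have "cc (m+3) * (real m + 3) = X * ((2 * real m + 3) * (2 * real m + 5) * (2 * real m + 7) * (real m + 4)) * (real m + 3)"
      using st[of "m+2", unfolded e3] c2 by (simp del: cc.simps add: algebra_simps)
    then show ?thesis using mp(3) by (simp del: cc.simps)
  qed
  have c4: "cc (m+4) = X * ((2 * real m + 3) * (2 * real m + 5) * (2 * real m + 7) * (2 * real m + 9))"
  proof -
    have "cc (m+4) * (real m + 4) = X * ((2 * real m + 3) * (2 * real m + 5) * (2 * real m + 7) * (2 * real m + 9)) * (real m + 4)"
      using st[of "m+3", unfolded e4] c3 by (simp del: cc.simps add: algebra_simps)
    then show ?thesis using mp(4) by (simp del: cc.simps)
  qed
  have p: "(2::real)^(m+2) = 4 * 2^m" "(2::real)^(m+3) = 8 * 2^m" "(2::real)^(m+1) = 2 * 2^m" by (simp_all add: power_add)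
  have i: "m + 4 - 3 = m + 1" "m + 4 - 2 = m + 2" "m + 4 - 1 = m + 3" "m + 3 - 3 = m" "m + 3 - 2 = m + 1" "m + 3 - 1 = m + 2"
     "m + 4 - 1 - 3 = m" "m+4-1-2 = m+1" "m+4-1-1 = m+2" by simp_all
  have j4: "j = 0 \<or> j = 1 \<or> j = 2 \<or> j = 3" using j by auto
  show ?thesis
    using j4
  proof (elim disjE)
    assume "j = 0"
    then show ?thesis unfolding m ee_def i c0 c1 by (simp add: algebra_simps)
  next
    assume "j = 1"
    then show ?thesis unfolding m ee_def i c0 c1 c2 c3 c4 p by (simp add: algebra_simps)
  next
    assume "j = 2"
    then show ?thesis unfolding m ee_def i c0 c1 c2 c3 c4 p by (simp add: algebra_simps)
  next
    assume "j = 3"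
    then show ?thesis unfolding m ee_def i c0 c1 c2 c3 c4 p by (simp add: algebra_simps)
  qed
qed


definition nf :: "bool \<times> bool \<times> bool \<Rightarrow> nat" where "nf g = 3 - nt g"

definition H :: "bool \<times> bool \<times> bool \<Rightarrow> nat \<Rightarrow> real" where
  "H g n = (if odd n \<and> n \<ge> 7 then fact n * ee (nf g) ((n-1) div 2) else 0)"

lemma UNIV_flags: "(UNIV :: (bool \<times> bool \<times> bool) set) =
  {(True,True,True),(True,True,False),(True,False,True),(True,False,False),
   (False,True,True),(False,True,False),(False,False,True),(False,False,False)}"
  by auto

lemma nt_le: "nt g \<le> 3" unfolding nt_def by (cases g) auto

lemma sum_mm:
  fixes F :: "nat \<Rightarrow> real"
  assumes "q \<ge> 3"
  shows "(\<Sum>g\<in>UNIV. F (nf g) * real (mm g f q)) = F (nf f) * real (q - nt f) + real (nf f) * F (nf f - 1)"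
proof -
  obtain f1 f2 f3 where f: "f = (f1,f2,f3)" by (cases f) auto
  show ?thesis unfolding f UNIV_flags using assms
    by (cases f1; cases f2; cases f3) (simp_all add: mm_def nt_def nf_def of_nat_diff)
qed

lemma ee3: "ee 0 3 = 1" "ee 1 3 = 0" "ee 2 3 = 0" "ee 3 3 = 0"
  by (simp_all add: ee_def numeral_eq_Suc)

theorem main_count:
  assumes "finite W"
  shows "real (card (CC W f)) = H f (card W)"
  using assms
proof (induction "card W" arbitrary: W f rule: less_induct)
  case less
  let ?n = "card W"
  show ?case
  proof (cases "?n < 7 \<or> even ?n")
    case True
    then show ?thesis using CC_small[OF less.prems] unfolding H_def by auto
  next
    case False
    then have odd: "odd ?n" and n7: "?n \<ge> 7" by auto
    show ?thesis
    proof (cases "?n = 7")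
      case True
      show ?thesis
      proof (cases "f = (True,True,True)")
        case ft: True
        have "nf f = 0" unfolding ft nf_def nt_def by simp
        then show ?thesis using card7[OF less.prems True] ft True unfolding H_def by (simp add: ee3 fact_numeral)
      next
        case ff: False
        have "nf f \<in> {1,2,3}" unfolding nf_def nt_def using ff by (cases f) auto
        then have "ee (nf f) 3 = 0" using ee3 by auto
        then show ?thesis using CC_7[OF less.prems True ff] True unfolding H_def by simp
      qed
    next
      case False
      then have n9: "?n \<ge> 9" using odd n7 by presburger
      obtain k where k: "?n = 2 * k + 1" using odd oddE by blast
      have k4: "k \<ge> 4" using n9 k by simp
      let ?S = "\<Sum>g\<in>UNIV. H g (?n - 2) * real (mm g f (?n - 3))"
      have IH: "real (card (CC (W - {x,y}) g)) = H g (?n - 2)" if "x \<in> W" "y \<in> W - {x}" for x y g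
      proof -
        have c: "card (W - {x,y}) = ?n - 2" using that less.prems by (simp add: card_Diff_subset)
        have "real (card (CC (W - {x,y}) g)) = H g (card (W - {x,y}))"
          by (rule less.hyps) (use c n9 less.prems in auto)
        then show ?thesis using c by simp
      qed
      have R: "real (card (CC W f) * ((?n - 1) div 2 - nt f)) =
         (\<Sum>x\<in>W. \<Sum>y\<in>W-{x}. \<Sum>g\<in>UNIV. real (card (CC (W-{x,y}) g)) * real (mm g f (?n - 3)))"
        using recur[OF less.prems, of f] by (simp only: of_nat_sum of_nat_mult)
      also have "\<dots> = (\<Sum>x\<in>W. \<Sum>y\<in>W-{x}. ?S)"
        by (rule sum.cong, simp, rule sum.cong, simp) (use IH in simp)
      also have "\<dots> = real ?n * real (?n - 1) * ?S"
        using less.prems by (simp add: card_Diff_subset)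
      finally have R2: "real (card (CC W f)) * real (k - nt f) = real ?n * real (?n - 1) * ?S"
        using k by simp
      have Hg: "H g (?n - 2) = fact (?n - 2) * ee (nf g) (k - 1)" for g
      proof -
        have "odd (?n - 2)" "?n - 2 \<ge> 7" using k n9 by auto
        moreover have "(?n - 2 - 1) div 2 = k - 1" using k by simp
        ultimately show ?thesis unfolding H_def by simp
      qed
      have S: "?S = fact (?n - 2) * (ee (nf f) (k - 1) * real (?n - 3 - nt f) + real (nf f) * ee (nf f - 1) (k - 1))"
      proof -
        have "?S = (\<Sum>g\<in>UNIV. fact (?n - 2) * (ee (nf g) (k - 1) * real (mm g f (?n - 3))))"
          by (rule sum.cong) (simp_all add: Hg)
        also have "\<dots> = fact (?n - 2) * (\<Sum>g\<in>UNIV. ee (nf g) (k - 1) * real (mm g f (?n - 3)))"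
          by (simp add: sum_distrib_left)
        also have "(\<Sum>g\<in>UNIV. ee (nf g) (k - 1) * real (mm g f (?n - 3))) =
            ee (nf f) (k - 1) * real (?n - 3 - nt f) + real (nf f) * ee (nf f - 1) (k - 1)"
          by (rule sum_mm[where F = "\<lambda>j. ee j (k - 1)"]) (use n9 in simp)
        finally show ?thesis .
      qed
      have ntf: "nt f \<le> 3" by (rule nt_le)
      have j3: "nf f \<le> 3" unfolding nf_def by simp
      have rec: "ee (nf f) k * (real k + real (nf f) - 3) = ee (nf f) (k-1) * (2 * real k + real (nf f) - 5)
          + real (nf f) * ee (nf f - 1) (k-1)" by (rule ee_rec[OF k4 j3])
      have e1: "real (k - nt f) = real k + real (nf f) - 3" using ntf k4 unfolding nf_def by (simp add: of_nat_diff)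
      have e2: "real (?n - 3 - nt f) = 2 * real k + real (nf f) - 5" using ntf k4 k unfolding nf_def by (simp add: of_nat_diff)
      have fn: "fact ?n = real ?n * real (?n - 1) * fact (?n - 2)"
      proof -
        have "?n = Suc (Suc (?n - 2))" using n9 by simp
        then have "fact ?n = (fact (Suc (Suc (?n - 2))) :: real)" by simp
        also have "\<dots> = real (Suc (Suc (?n - 2))) * real (Suc (?n - 2)) * fact (?n - 2)" by simp
        finally show ?thesis using n9 by (simp add: of_nat_diff)
      qed
      have Hf: "H f ?n = fact ?n * ee (nf f) k" unfolding H_def using odd n7 k by simp
      have pos: "real (k - nt f) > 0" using ntf k4 by simp
      have "H f ?n * real (k - nt f) = fact ?n * (ee (nf f) k * (real k + real (nf f) - 3))"
        unfolding Hf e1 by simp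
      also have "\<dots> = (real ?n * real (?n - 1) * fact (?n - 2)) * (ee (nf f) (k-1) * (2 * real k + real (nf f) - 5)
          + real (nf f) * ee (nf f - 1) (k-1))" unfolding rec fn ..
      also have "\<dots> = real ?n * real (?n - 1) * ?S"
        unfolding S e2 by (simp only: mult.assoc)
      finally have "H f ?n * real (k - nt f) = real ?n * real (?n - 1) * ?S" .
      then show ?thesis using R2 pos by (metis mult_right_cancel less_irrefl)
    qed
  qed
qed


lemma indeg_pars: "indeg E v = card (pars E v)" unfolding indeg_def pars_def by simp
lemma outdeg_chs: "outdeg E v = card (chs E v)" unfolding outdeg_def chs_def by simp

lemma rank_exists:
  assumes fE: "finite E" and ac: "\<forall>v. (v,v) \<notin> E\<^sup>+"
  shows "\<exists>h::nat\<Rightarrow>nat. \<forall>u w. (u,w) \<in> E \<longrightarrow> h u < h w"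
proof -
  let ?h = "\<lambda>u. card {x. (x,u) \<in> E\<^sup>+}"
  have fin: "finite {x. (x,u) \<in> E\<^sup>+}" for u
  proof -
    have "finite (E\<^sup>+)" using fE by (rule finite_trancl[THEN iffD2])
    then have "finite (fst ` E\<^sup>+)" by simp
    moreover have "{x. (x,u) \<in> E\<^sup>+} \<subseteq> fst ` E\<^sup>+" by force
    ultimately show ?thesis using finite_subset by blast
  qed
  have "?h u < ?h w" if e: "(u,w) \<in> E" for u w
  proof (rule psubset_card_mono[OF fin])
    show "{x. (x,u) \<in> E\<^sup>+} \<subset> {x. (x,w) \<in> E\<^sup>+}"
    proof
      show "{x. (x,u) \<in> E\<^sup>+} \<subseteq> {x. (x,w) \<in> E\<^sup>+}" using e by (auto intro: trancl_into_trancl)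
      have "u \<in> {x. (x,w) \<in> E\<^sup>+}" using e by auto
      moreover have "u \<notin> {x. (x,u) \<in> E\<^sup>+}" using ac by auto
      ultimately show "{x. (x,u) \<in> E\<^sup>+} \<noteq> {x. (x,w) \<in> E\<^sup>+}" by blast
    qed
  qed
  then show ?thesis by (intro exI[where x = ?h] allI impI)
qed

definition SS :: "nat \<Rightarrow> (nat \<times> nat) set set" where
  "SS n = {E. normal_network n E \<and> card {v \<in> verts n. is_reticulation E v} = 1}"

lemma net_SS:
  assumes "net (verts n) E a"
  shows "E \<in> SS n"
proof -
  obtain \<rho> r b c h where "netw (verts n) E a \<rho> r b c h" using net_netw[OF assms] by blast
  then interpret netw "verts n" E a \<rho> r b c h .
  have finp: "finite (pars E v)" for v
    using finite_subset[of "pars E v" "verts n"] fin sub unfolding pars_def by auto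
  have finc: "finite (chs E v)" for v
    using finite_subset[of "chs E v" "verts n"] fin sub unfolding chs_def by auto
  have ret_iff: "is_reticulation E v \<longleftrightarrow> v = r" if "v \<in> verts n" for v
  proof
    assume "is_reticulation E v"
    then have "card (pars E v) = 2" unfolding is_reticulation_def indeg_pars by simp
    then obtain u u' where uu: "u \<noteq> u'" "pars E v = {u,u'}" by (meson card_2_iff)
    then have "u \<in> pars E v" "u' \<in> pars E v" by simp_all
    then have "(u,v) \<in> E" "(u',v) \<in> E" unfolding pars_def by simp_all
    then show "v = r" using two_par uu(1) by blast
  next
    assume "v = r"
    then show "is_reticulation E v" unfolding is_reticulation_def indeg_pars outdeg_chs using rp rc ab by simp
  qed
  have ch2: "card (chs E v) = 2" if "v \<in> verts n" "v \<noteq> r" "chs E v \<noteq> {}" for v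
    using degc[OF that(1,2)] that(3) by auto
  have phylo: "phylo_network n E"
    unfolding phylo_network_def
  proof (intro conjI)
    show "n \<ge> 1" using rootV unfolding verts_def by auto
    show "E \<subseteq> verts n \<times> verts n" by (rule sub)
    show "\<forall>v. (v,v) \<notin> E\<^sup>+" using acyc by blast
    show "\<forall>u\<in>verts n. \<forall>v\<in>verts n. (u, v) \<in> (E \<union> E\<inverse>)\<^sup>*"
    proof (intro ballI)
      fix u v assume "u \<in> verts n" "v \<in> verts n"
      then have 1: "(\<rho>,u) \<in> E\<^sup>*" and 2: "(\<rho>,v) \<in> E\<^sup>*" using reach by auto
      have "(u,\<rho>) \<in> (E\<inverse>)\<^sup>*" using 1 by (simp add: rtrancl_converse)
      then have "(u,\<rho>) \<in> (E \<union> E\<inverse>)\<^sup>*" by (rule rtrancl_mono[THEN subsetD, rotated]) auto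
      moreover have "(\<rho>,v) \<in> (E \<union> E\<inverse>)\<^sup>*" using 2 by (rule rtrancl_mono[THEN subsetD, rotated]) auto
      ultimately show "(u,v) \<in> (E \<union> E\<inverse>)\<^sup>*" by (rule rtrancl_trans)
    qed
    have rootset: "{v \<in> verts n. indeg E v = 0} = {\<rho>}"
    proof (rule set_eqI)
      fix v
      show "v \<in> {v \<in> verts n. indeg E v = 0} \<longleftrightarrow> v \<in> {\<rho>}"
        using root_u[of v] rootV root_p finp[of v] unfolding indeg_pars by auto
    qed
    show "n = 1 \<and> E = {} \<or>
    card {v \<in> verts n. indeg E v = 0} = 1 \<and>
    (\<forall>v\<in>verts n.
        indeg E v = 0 \<and> outdeg E v = 2 \<or>
        indeg E v = 1 \<and> outdeg E v = 2 \<or>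
        indeg E v = 2 \<and> outdeg E v = 1 \<or> indeg E v = 1 \<and> outdeg E v = 0)"
    proof (rule disjI2, intro conjI ballI)
      show "card {v \<in> verts n. indeg E v = 0} = 1" using rootset by simp
      fix v assume vV: "v \<in> verts n"
      show "indeg E v = 0 \<and> outdeg E v = 2 \<or>
        indeg E v = 1 \<and> outdeg E v = 2 \<or>
        indeg E v = 2 \<and> outdeg E v = 1 \<or> indeg E v = 1 \<and> outdeg E v = 0"
      proof (cases "v = \<rho>")
        case True
        then show ?thesis using root_p ch2[OF rootV r_ne_root[symmetric] root_c] unfolding indeg_pars outdeg_chs by simp
      next
        case nr: False
        show ?thesis
        proof (cases "v = r")
          case True
          then show ?thesis using ret_iff[OF vV] unfolding is_reticulation_def by simp
        next
          case False
          obtain p where "pars E v = {p}" using pars_single[OF vV nr False] by auto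
          then have "indeg E v = 1" unfolding indeg_pars by simp
          moreover have "outdeg E v = 0 \<or> outdeg E v = 2"
            using ch2[OF vV False] finc unfolding outdeg_chs by (cases "chs E v = {}") auto
          ultimately show ?thesis by auto
        qed
      qed
    qed
  qed
  have tc: "tree_child n E"
    unfolding tree_child_def
  proof (intro conjI ballI impI)
    show "phylo_network n E" by (rule phylo)
    fix v assume vV: "v \<in> verts n" and od: "outdeg E v \<noteq> 0"
    show "\<exists>w. (v,w) \<in> E \<and> \<not> is_reticulation E w"
    proof (cases "v = r")
      case True
      then show ?thesis using rcE c_ne_r ret_iff[OF cV] by auto
    next
      case False
      have "chs E v \<noteq> {}" using od unfolding outdeg_chs by auto
      then obtain c1 d1 where cd: "c1 \<noteq> d1" "chs E v = {c1,d1}" using degc[OF vV False] by auto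
      then have e: "(v,c1) \<in> E" "(v,d1) \<in> E" unfolding chs_def by auto
      then have "c1 \<in> verts n" "d1 \<in> verts n" using sub by auto
      show ?thesis
      proof (cases "c1 = r")
        case True
        then have "d1 \<noteq> r" using cd by simp
        then show ?thesis using e(2) ret_iff[OF \<open>d1 \<in> verts n\<close>] by blast
      next
        case False
        then show ?thesis using e(1) ret_iff[OF \<open>c1 \<in> verts n\<close>] by blast
      qed
    qed
  qed
  have nm: "\<forall>u v. (u,v) \<in> E O E\<^sup>+ \<longrightarrow> (u,v) \<notin> E"
  proof (intro allI impI notI)
    fix u v assume c: "(u,v) \<in> E O E\<^sup>+" and e: "(u,v) \<in> E"
    then obtain w where w: "(u,w) \<in> E" "(w,v) \<in> E\<^sup>+" by auto
    then obtain q where q: "(w,q) \<in> E\<^sup>*" "(q,v) \<in> E" by (meson tranclD2)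
    have "q \<noteq> u"
    proof
      assume "q = u"
      then have "(u,u) \<in> E\<^sup>+" using w q by auto
      then show False using acyc by blast
    qed
    then have vr: "v = r" using two_par[OF e q(2)] by simp
    have uq: "(u,q) \<in> E\<^sup>+" using w(1) q(1) by auto
    have "u = a \<or> u = b" "q = a \<or> q = b" using e q(2) vr par_r by auto
    then show False using uq nab nba \<open>q \<noteq> u\<close> by auto
  qed
  have "{v \<in> verts n. is_reticulation E v} = {r}" using ret_iff rV by auto
  then show ?thesis unfolding SS_def normal_network_def using tc nm by simp
qed


lemma card1E: assumes "card S = 1" obtains x where "S = {x}"
  using assms card_1_singleton_iff[of S] by auto
lemma card2E: assumes "card S = 2" obtains x y where "x \<noteq> y" "S = {x,y}"
  using assms card_2_iff[of S] by auto

lemma SS_net: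
  assumes "E \<in> SS n"
  shows "card {a. net (verts n) E a} = 2"
proof -
  let ?V = "verts n"
  have nn: "normal_network n E" and r1: "card {v \<in> ?V. is_reticulation E v} = 1"
    using assms unfolding SS_def by auto
  have tc: "tree_child n E" and nm: "\<forall>u v. (u,v) \<in> E O E\<^sup>+ \<longrightarrow> (u,v) \<notin> E"
    using nn unfolding normal_network_def by auto
  have ph: "phylo_network n E" using tc unfolding tree_child_def by auto
  have sub: "E \<subseteq> ?V \<times> ?V" and ac: "\<forall>v. (v,v) \<notin> E\<^sup>+" and nge: "n \<ge> 1"
    using ph unfolding phylo_network_def by auto
  have fV: "finite ?V" unfolding verts_def by simp
  have fE: "finite E" using sub fV by (meson finite_SigmaI finite_subset)
  have finp: "finite (pars E v)" for v
    using finite_subset[of "pars E v" ?V] fV sub unfolding pars_def by auto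
  have finc: "finite (chs E v)" for v
    using finite_subset[of "chs E v" ?V] fV sub unfolding chs_def by auto
  obtain r where rr: "{v \<in> ?V. is_reticulation E v} = {r}"
    using card1E[OF r1] .
  have rV: "r \<in> ?V" and rret: "is_reticulation E r" using rr by auto
  have ret_u: "v \<in> ?V \<Longrightarrow> is_reticulation E v \<Longrightarrow> v = r" for v using rr by auto
  have "E \<noteq> {}"
  proof
    assume "E = {}"
    then have "indeg E r = 0" unfolding indeg_def by simp
    then show False using rret unfolding is_reticulation_def by simp
  qed
  then have deg: "card {v \<in> ?V. indeg E v = 0} = 1 \<and>
    (\<forall>v\<in>?V. indeg E v = 0 \<and> outdeg E v = 2 \<or> indeg E v = 1 \<and> outdeg E v = 2 \<or>
        indeg E v = 2 \<and> outdeg E v = 1 \<or> indeg E v = 1 \<and> outdeg E v = 0)"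
    using ph unfolding phylo_network_def by auto
  obtain \<rho> where rho: "{v \<in> ?V. indeg E v = 0} = {\<rho>}"
    using card1E[OF conjunct1[OF deg]] .
  have "\<rho> \<in> {v \<in> ?V. indeg E v = 0}" using rho by simp
  then have rhoV: "\<rho> \<in> ?V" and "card (pars E \<rho>) = 0" unfolding indeg_pars by auto
  then have rho0: "pars E \<rho> = {}" using finp[of \<rho>] by simp
  have rho_u: "v \<in> ?V \<Longrightarrow> pars E v = {} \<Longrightarrow> v = \<rho>" for v using rho unfolding indeg_pars by auto
  have rhoc: "chs E \<rho> \<noteq> {}" using deg rhoV rho0 unfolding indeg_pars outdeg_chs by auto
  have c1: "card (chs E r) = 1" using rret unfolding is_reticulation_def outdeg_chs by simp
  obtain c where rc: "chs E r = {c}" using card1E[OF c1] .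
  have pr2: "card (pars E r) = 2" using rret unfolding is_reticulation_def indeg_pars by simp
  obtain h :: "nat \<Rightarrow> nat" where h: "\<forall>u w. (u,w) \<in> E \<longrightarrow> h u < h w" using rank_exists[OF fE ac] by blast
  have degp: "pars E v = {} \<or> (\<exists>p. pars E v = {p})" if "v \<in> ?V" "v \<noteq> r" for v
  proof -
    have "indeg E v = 0 \<or> indeg E v = 1"
      using deg that ret_u[of v] unfolding is_reticulation_def by auto
    then show ?thesis using finp[of v] unfolding indeg_pars by (auto simp: card_1_singleton_iff)
  qed
  have degc: "chs E v = {} \<or> (\<exists>c d. c \<noteq> d \<and> chs E v = {c,d})" if "v \<in> ?V" "v \<noteq> r" for v
  proof -
    have "outdeg E v = 0 \<or> outdeg E v = 2"
      using deg that ret_u[of v] unfolding is_reticulation_def by auto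
    then show ?thesis using finc[of v] unfolding outdeg_chs by (auto simp: card_2_iff)
  qed
  have netiff: "net ?V E a \<longleftrightarrow> a \<in> pars E r" for a
  proof
    assume "net ?V E a"
    then obtain \<rho>' r' b' c' h' where "netw ?V E a \<rho>' r' b' c' h'" using net_netw by blast
    then interpret N: netw ?V E a \<rho>' r' b' c' h' .
    have "is_reticulation E r'" unfolding is_reticulation_def indeg_pars outdeg_chs using N.rp N.rc N.ab by simp
    then have "r' = r" using ret_u N.rV by simp
    then show "a \<in> pars E r" using N.rp by simp
  next
    assume ar: "a \<in> pars E r"
    obtain u u' where uu: "u \<noteq> u'" "pars E r = {u,u'}"
      using card2E[OF pr2] .
    obtain b where ab: "a \<noteq> b" "pars E r = {a,b}"
    proof (cases "a = u")
      case True then show thesis using that[of u'] uu by simp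
    next
      case False then have "a = u'" using ar uu by simp
      then show thesis using that[of u] uu by (simp add: insert_commute)
    qed
    have arE: "(a,r) \<in> E" and brE: "(b,r) \<in> E" using ab unfolding pars_def by auto
    have nab: "False" if H: "(a,b) \<in> E\<^sup>+" "(a,r) \<in> E" "(b,r) \<in> E" for a b
    proof -
      obtain w where w: "(a,w) \<in> E" "(w,b) \<in> E\<^sup>*" using tranclD[OF H(1)] by blast
      then have "(w,r) \<in> E\<^sup>+" using H(3) by auto
      then have "(a,r) \<in> E O E\<^sup>+" using w(1) by auto
      then show ?thesis using nm H(2) by blast
    qed
    have "netw ?V E a \<rho> r b c h"
    proof (rule netw.intro)
      show "finite ?V" by (rule fV)
      show "E \<subseteq> ?V \<times> ?V" by (rule sub)
      show "\<And>u w. (u,w) \<in> E \<Longrightarrow> h u < h w" using h by blast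
      show "\<rho> \<in> ?V" by (fact rhoV)
      show "pars E \<rho> = {}" by (fact rho0)
      show "chs E \<rho> \<noteq> {}" by (fact rhoc)
      show "\<And>v. v \<in> ?V \<Longrightarrow> pars E v = {} \<Longrightarrow> v = \<rho>" by (rule rho_u)
      show "a \<noteq> b" by (fact ab(1))
      show "pars E r = {a,b}" by (fact ab(2))
      show "chs E r = {c}" by (fact rc)
      show "(a,b) \<notin> E\<^sup>+" using nab[of a b] arE brE by blast
      show "(b,a) \<notin> E\<^sup>+" using nab[of b a] arE brE by blast
      show "\<And>v. v \<in> ?V \<Longrightarrow> v \<noteq> r \<Longrightarrow> pars E v = {} \<or> (\<exists>p. pars E v = {p})" by (rule degp)
      show "\<And>v. v \<in> ?V \<Longrightarrow> v \<noteq> r \<Longrightarrow> chs E v = {} \<or> (\<exists>c d. c \<noteq> d \<and> chs E v = {c,d})" by (rule degc)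
    qed
    then show "net ?V E a" by (rule netw_net)
  qed
  have "{a. net ?V E a} = pars E r" using netiff by auto
  then show ?thesis using pr2 by simp
qed

lemma NS_card: "card (NS (verts n)) = 2 * N1 n"
proof -
  have eq: "NS (verts n) = Sigma (SS n) (\<lambda>E. {a. net (verts n) E a})"
    unfolding NS_def using net_SS by auto
  have fS: "finite (SS n)"
  proof (rule finite_subset)
    show "SS n \<subseteq> Pow (verts n \<times> verts n)"
      unfolding SS_def normal_network_def tree_child_def phylo_network_def by auto
    show "finite (Pow (verts n \<times> verts n))" unfolding verts_def by simp
  qed
  have "card (NS (verts n)) = (\<Sum>E\<in>SS n. card {a. net (verts n) E a})"
    unfolding eq
  proof (rule card_SigmaI[OF fS])
    show "\<forall>E\<in>SS n. finite {a. net (verts n) E a}"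
      using SS_net card.infinite by fastforce
  qed
  also have "\<dots> = (\<Sum>E\<in>SS n. 2)" using SS_net by simp
  also have "\<dots> = 2 * card (SS n)" by simp
  finally show ?thesis unfolding N1_def SS_def by simp
qed

lemma NS_sum: "finite W \<Longrightarrow> card (NS W) = (\<Sum>g\<in>UNIV. card (CC W g))"
proof -
  assume fW: "finite W"
  have "card (NS W) = (\<Sum>N\<in>NS W. 1)" by simp
  also have "\<dots> = (\<Sum>g\<in>UNIV. \<Sum>N\<in>{N\<in>NS W. fl (fst N) (snd N) = g}. 1)"
    by (rule sum.group[symmetric]) (use finite_NS[OF fW] in auto)
  also have "\<dots> = (\<Sum>g\<in>UNIV. card (CC W g))"
  proof (rule sum.cong)
    fix g :: "bool \<times> bool \<times> bool"
    have "{N\<in>NS W. fl (fst N) (snd N) = g} = CC W g" unfolding NS_def CC_def by auto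
    then show "(\<Sum>N\<in>{N\<in>NS W. fl (fst N) (snd N) = g}. 1) = card (CC W g)" by simp
  qed simp
  finally show ?thesis .
qed


lemma cc_gchoose: "cc k = ((-3/2::real) gchoose k) * (-2)^k"
proof (induction k)
  case 0 then show ?case by simp
next
  case (Suc k)
  have m: "(-3/2::real) * ((-3/2) gchoose k) = real k * ((-3/2) gchoose k) + real (Suc k) * ((-3/2) gchoose (Suc k))"
    by (rule gbinomial_mult_1)
  have hG: "((-3/2::real) gchoose (Suc k)) = (-3/2 - real k) * ((-3/2) gchoose k) / real (Suc k)"
    using m by (simp add: field_simps)
  have "cc (Suc k) = cc k * (2 * real k + 3) / (real k + 1)" by simp
  also have "\<dots> = ((-3/2::real) gchoose k) * (-2)^k * (2 * real k + 3) / (real k + 1)" using Suc.IH by simp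
  also have "\<dots> = ((-3/2 - real k) * ((-3/2) gchoose k) / real (Suc k)) * ((-2) * (-2)^k)"
    by (simp add: field_simps)
  also have "\<dots> = ((-3/2::real) gchoose (Suc k)) * (-2)^(Suc k)" using hG by simp
  finally show ?case .
qed

definition dd :: "nat \<Rightarrow> real" where
  "dd k = 2 * cc k - (if k = 0 then 0 else 3 * cc (k-1)) - 2 * 2^k + (if k = 0 then 0 else 2^(k-1))"

lemma dd_sums:
  fixes w :: real
  assumes w: "\<bar>2 * w\<bar> < 1"
  shows "(\<lambda>k. dd k * w^k) sums ((2 - 3*w) * (1 - 2*w) powr (-3/2) - (2 - w) / (1 - 2*w))"
proof -
  let ?S = "(1 - 2*w) powr (-3/2)"
  have C: "(\<lambda>k. cc k * w^k) sums ?S"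
  proof -
    have "\<bar>-2*w\<bar> < 1" using w by simp
    from gen_binomial_real[OF this, of "-3/2"]
    have "(\<lambda>k. ((-3/2) gchoose k) * (-2*w)^k) sums (1 + (-2*w)) powr (-3/2)" .
    moreover have "((-3/2) gchoose k) * (-2*w)^k = cc k * w^k" for k
      using power_mult_distrib[of "-2" w k] by (simp add: cc_gchoose)
    ultimately show ?thesis by simp
  qed
  have G: "(\<lambda>k. (2*w)^k) sums (1 / (1 - 2*w))"
    using geometric_sums[of "2*w"] w by simp
  have C2: "(\<lambda>k. (if k = 0 then 0 else 3 * cc (k-1)) * w^k) sums (3 * w * ?S)"
  proof -
    have "(\<lambda>k. 3 * w * (cc k * w^k)) sums (3 * w * ?S)" by (rule sums_mult[OF C])
    let ?f = "\<lambda>k. (if k = 0 then 0 else 3 * cc (k-1)) * w^k"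
    have "(\<lambda>k. ?f (Suc k)) = (\<lambda>k. 3 * w * (cc k * w^k))" by (simp add: algebra_simps)
    then have "(\<lambda>k. ?f (Suc k)) sums (3 * w * ?S)" using \<open>(\<lambda>k. 3 * w * (cc k * w^k)) sums (3 * w * ?S)\<close> by simp
    then have "?f sums (3 * w * ?S + ?f 0)" by (rule sums_Suc_iff[of ?f, THEN iffD1])
    then show ?thesis by simp
  qed
  have G2: "(\<lambda>k. (if k = 0 then 0 else 2^(k-1)) * w^k) sums (w / (1 - 2*w))"
  proof -
    have "(\<lambda>k. w * (2*w)^k) sums (w * (1 / (1 - 2*w)))" by (rule sums_mult[OF G])
    let ?f = "\<lambda>k. (if k = 0 then 0 else 2^(k-1)) * w^k"
    have "(\<lambda>k. ?f (Suc k)) = (\<lambda>k. w * (2*w)^k)" by (simp add: algebra_simps power_mult_distrib)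
    then have "(\<lambda>k. ?f (Suc k)) sums (w / (1 - 2*w))" using \<open>(\<lambda>k. w * (2*w)^k) sums (w * (1 / (1 - 2*w)))\<close> by simp
    then have "?f sums (w / (1 - 2*w) + ?f 0)" by (rule sums_Suc_iff[of ?f, THEN iffD1])
    then show ?thesis by simp
  qed
  have "(\<lambda>k. 2 * (cc k * w^k) - (if k = 0 then 0 else 3 * cc (k-1)) * w^k - 2 * (2*w)^k + (if k = 0 then 0 else 2^(k-1)) * w^k)
      sums (2 * ?S - 3 * w * ?S - 2 * (1 / (1 - 2*w)) + w / (1 - 2*w))"
    by (intro sums_add sums_diff sums_mult C C2 G G2)
  moreover have "2 * (cc k * w^k) - (if k = 0 then 0 else 3 * cc (k-1)) * w^k - 2 * (2*w)^k + (if k = 0 then 0 else 2^(k-1)) * w^k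
      = dd k * w^k" for k
    unfolding dd_def by (simp add: algebra_simps power_mult_distrib)
  moreover have "2 * ?S - 3 * w * ?S - 2 * (1 / (1 - 2*w)) + w / (1 - 2*w) = (2 - 3*w) * ?S - (2 - w) / (1 - 2*w)"
  proof -
    have gen: "2 * S - 3 * w * S - 2 * (1 / d) + w / d = (2 - 3*w) * S - (2 - w) / d" if "d \<noteq> 0" for S d :: real
      using that by (simp add: field_simps)
    have "1 - 2*w \<noteq> 0" using w by auto
    then show ?thesis by (rule gen)
  qed
  ultimately show ?thesis by simp
qed

lemma poly1: "(t::real) > 0 \<Longrightarrow> (2 - 3*((1-t^2)/2)) * (1/t^3) - (2 - (1-t^2)/2)/t^2 = (1-t)^3/(2*t^3)"
  by (simp add: field_simps power2_eq_square power3_eq_cube)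

lemma poly2: "(2 - 3*((1-t^2)/2)) - (2 - (1-t^2)/2) * t = ((1-t)^3/2 :: real)"
  by (simp add: field_simps power2_eq_square power3_eq_cube)

lemma closed_form:
  fixes z :: real
  assumes z: "\<bar>z\<bar> < 1 / sqrt 2"
  shows "z * ((2 - 3*z^2) * (1 - 2*z^2) powr (-3/2) - (2 - z^2) / (1 - 2*z^2)) =
           z * (1 - sqrt (1 - 2 * z\<^sup>2)) ^ 3 / (2 * (1 - 2 * z\<^sup>2) powr (3/2))"
    and "z * (1 - sqrt (1 - 2 * z\<^sup>2)) ^ 3 / (2 * (1 - 2 * z\<^sup>2) powr (3/2))
         = z * (a1 (z\<^sup>2) - b1 (z\<^sup>2) * sqrt (1 - 2 * z\<^sup>2)) / (1 - 2 * z\<^sup>2) powr (3/2)"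
proof -
  have "z^2 < 1/2"
  proof -
    have "\<bar>z\<bar>^2 < (1 / sqrt 2)^2" using z by (intro power_strict_mono) auto
    then show ?thesis by (simp add: power_divide)
  qed
  then have pos: "1 - 2*z^2 > 0" by simp
  define t where "t = sqrt (1 - 2*z^2)"
  have t0: "t > 0" using pos unfolding t_def by simp
  have ss: "1 - 2*z^2 = t^2" using pos unfolding t_def by simp
  have p32: "(1 - 2*z^2) powr (3/2) = t^3"
  proof -
    have "(1 - 2*z^2) powr (3/2) = (1 - 2*z^2) powr (1 + 1/2)" by simp
    also have "\<dots> = (1 - 2*z^2) powr 1 * (1 - 2*z^2) powr (1/2)" by (rule powr_add)
    also have "\<dots> = (1 - 2*z^2) * sqrt (1 - 2*z^2)" using pos by (simp add: powr_half_sqrt)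
    finally show ?thesis using ss unfolding t_def by (simp add: power3_eq_cube power2_eq_square)
  qed
  have pm32: "(1 - 2*z^2) powr (-3/2) = 1 / t^3"
  proof -
    have "(1 - 2*z^2) powr (-3/2) = 1 / (1 - 2*z^2) powr (3/2)"
      by (simp add: powr_minus_divide)
    then show ?thesis using p32 by simp
  qed
  have w: "z^2 = (1 - t^2) / 2" using ss by simp
  have L: "z * ((2 - 3*z^2) * (1 - 2*z^2) powr (-3/2) - (2 - z^2) / (1 - 2*z^2)) = z * ((1-t)^3/(2*t^3))"
  proof -
    have "(2 - 3*z^2) * (1 - 2*z^2) powr (-3/2) - (2 - z^2) / (1 - 2*z^2) =
        (2 - 3*((1-t^2)/2)) * (1/t^3) - (2 - (1-t^2)/2)/t^2"
      by (unfold pm32, unfold ss, unfold w) (rule refl)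
    then show ?thesis using poly1[OF t0] by simp
  qed
  have R: "z * (1 - sqrt (1 - 2 * z\<^sup>2)) ^ 3 / (2 * (1 - 2 * z\<^sup>2) powr (3/2)) = z * ((1-t)^3/(2*t^3))"
    unfolding p32 t_def[symmetric] by simp
  show "z * ((2 - 3*z^2) * (1 - 2*z^2) powr (-3/2) - (2 - z^2) / (1 - 2*z^2)) =
           z * (1 - sqrt (1 - 2 * z\<^sup>2)) ^ 3 / (2 * (1 - 2 * z\<^sup>2) powr (3/2))"
    using L R by simp
  have AB: "a1 (z\<^sup>2) - b1 (z\<^sup>2) * sqrt (1 - 2 * z\<^sup>2) = (1-t)^3/2"
    by (unfold a1_def b1_def, unfold t_def[symmetric], unfold w) (rule poly2)
  have "z * (a1 (z\<^sup>2) - b1 (z\<^sup>2) * sqrt (1 - 2 * z\<^sup>2)) / (1 - 2 * z\<^sup>2) powr (3/2)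
      = z * ((1-t)^3/2) / t^3" unfolding p32 AB ..
  also have "\<dots> = z * ((1-t)^3/(2*t^3))" by simp
  finally show "z * (1 - sqrt (1 - 2 * z\<^sup>2)) ^ 3 / (2 * (1 - 2 * z\<^sup>2) powr (3/2))
         = z * (a1 (z\<^sup>2) - b1 (z\<^sup>2) * sqrt (1 - 2 * z\<^sup>2)) / (1 - 2 * z\<^sup>2) powr (3/2)"
    using R by simp
qed

lemma sum_ee: "(\<Sum>g\<in>UNIV. ee (nf g) k) = ee 0 k + 3 * ee 1 k + 3 * ee 2 k + ee 3 k"
  unfolding UNIV_flags by (simp add: nf_def nt_def)

lemma ee_sum_dd: "k \<ge> 3 \<Longrightarrow> ee 0 k + 3 * ee 1 k + 3 * ee 2 k + ee 3 k = 2 * dd k"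
proof -
  assume k: "k \<ge> 3"
  then obtain m where m: "k = m + 3" by (metis add.commute le_Suc_ex)
  have p: "(2::real)^(m+3) = 8 * 2^m" "(2::real)^(m+2) = 4 * 2^m" "(2::real)^(m+1) = 2 * 2^m"
    by (simp_all add: power_add)
  have i: "m + 3 - 3 = m" "m + 3 - 2 = m + 1" "m + 3 - 1 = m + 2" by simp_all
  show ?thesis unfolding m ee_def dd_def i p by (simp del: cc.simps add: algebra_simps)
qed

lemma dd_small: "dd 0 = 0" "dd 1 = 0" "dd 2 = 0"
  by (simp_all add: dd_def numeral_eq_Suc)

lemma N1_formula: "real (N1 n) = (if odd n then fact n * dd ((n - 1) div 2) else 0)"
proof -
  have "real (2 * N1 n) = real (card (NS (verts n)))" using NS_card by simp
  also have "\<dots> = (\<Sum>g\<in>UNIV. real (card (CC (verts n) g)))"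
    using NS_sum[of "verts n"] unfolding verts_def by simp
  also have "\<dots> = (\<Sum>g\<in>UNIV. H g n)"
    using main_count[of "verts n"] unfolding verts_def by simp
  finally have E: "2 * real (N1 n) = (\<Sum>g\<in>UNIV. H g n)" by simp
  show ?thesis
  proof (cases "odd n \<and> n \<ge> 7")
    case True
    let ?k = "(n - 1) div 2"
    have k3: "?k \<ge> 3" using True by presburger
    have "(\<Sum>g\<in>UNIV. H g n) = (\<Sum>g\<in>UNIV. fact n * ee (nf g) ?k)"
      unfolding H_def using True by simp
    also have "\<dots> = fact n * (\<Sum>g\<in>UNIV. ee (nf g) ?k)" by (simp add: sum_distrib_left)
    also have "\<dots> = fact n * (2 * dd ?k)" unfolding sum_ee ee_sum_dd[OF k3] ..
    finally show ?thesis using E True by simp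
  next
    case False
    have "H g n = 0" for g unfolding H_def using False by auto
    then have "(\<Sum>g\<in>UNIV. H g n) = 0" by simp
    then have z: "real (N1 n) = 0" using E by simp
    show ?thesis
    proof (cases "odd n")
      case True
      then have "n < 7" using False by auto
      then have "(n - 1) div 2 < 3" by simp
      then have "(n - 1) div 2 \<in> {0,1,2}" by auto
      then have "dd ((n - 1) div 2) = 0" using dd_small by auto
      then show ?thesis using z by simp
    next
      case False then show ?thesis using z by simp
    qed
  qed
qed

theorem proposition1:
  fixes z :: real
  assumes "\<bar>z\<bar> < 1 / sqrt 2"
  shows "(\<lambda>n. real (N1 n) * z ^ n / fact n) sums
           (z * (1 - sqrt (1 - 2 * z\<^sup>2)) ^ 3 / (2 * (1 - 2 * z\<^sup>2) powr (3/2)))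
       \<and> z * (1 - sqrt (1 - 2 * z\<^sup>2)) ^ 3 / (2 * (1 - 2 * z\<^sup>2) powr (3/2))
         = z * (a1 (z\<^sup>2) - b1 (z\<^sup>2) * sqrt (1 - 2 * z\<^sup>2)) / (1 - 2 * z\<^sup>2) powr (3/2)"
proof
  note CF = closed_form[OF assms]
  have z2: "z^2 < 1/2"
  proof -
    have "\<bar>z\<bar>^2 < (1 / sqrt 2)^2" using assms by (intro power_strict_mono) auto
    then show ?thesis by (simp add: power_divide)
  qed
  have w: "\<bar>2 * z^2\<bar> < 1" using z2 by simp
  let ?f = "\<lambda>n. real (N1 n) * z ^ n / fact n"
  have fe: "?f n = (if odd n then dd ((n - 1) div 2) * z^n else 0)" for n
    unfolding N1_formula by simp
  have "(\<lambda>k. z * (dd k * (z^2)^k)) sums (z * ((2 - 3*z^2) * (1 - 2*z^2) powr (-3/2) - (2 - z^2) / (1 - 2*z^2)))"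
    by (rule sums_mult[OF dd_sums[OF w]])
  moreover have "(\<lambda>k. ?f (2 * k + 1)) = (\<lambda>k. z * (dd k * (z^2)^k))"
  proof (rule ext)
    fix k
    have P: "z^(2 * k + 1) = z * (z^2)^k" by (simp add: power_mult power_add)
    have "?f (2 * k + 1) = dd k * z^(2 * k + 1)" using fe[of "2 * k + 1"] by simp
    also have "\<dots> = z * (dd k * (z^2)^k)" unfolding P by simp
    finally show "?f (2 * k + 1) = z * (dd k * (z^2)^k)" .
  qed
  ultimately have "(\<lambda>k. ?f (2 * k + 1)) sums (z * ((2 - 3*z^2) * (1 - 2*z^2) powr (-3/2) - (2 - z^2) / (1 - 2*z^2)))"
    by simp
  then have "?f sums (z * ((2 - 3*z^2) * (1 - 2*z^2) powr (-3/2) - (2 - z^2) / (1 - 2*z^2)))"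
  proof (subst (asm) sums_mono_reindex)
    show "strict_mono (\<lambda>k::nat. 2 * k + 1)" by (rule strict_monoI) simp
    show "?f n = 0" if "n \<notin> range (\<lambda>k::nat. 2 * k + 1)" for n
    proof -
      have "even n" using that oddE by (metis rangeI)
      then show ?thesis using fe by simp
    qed
  qed
  then show "?f sums (z * (1 - sqrt (1 - 2 * z\<^sup>2)) ^ 3 / (2 * (1 - 2 * z\<^sup>2) powr (3/2)))"
    using CF(1) by simp
  show "z * (1 - sqrt (1 - 2 * z\<^sup>2)) ^ 3 / (2 * (1 - 2 * z\<^sup>2) powr (3/2))
         = z * (a1 (z\<^sup>2) - b1 (z\<^sup>2) * sqrt (1 - 2 * z\<^sup>2)) / (1 - 2 * z\<^sup>2) powr (3/2)"
    by (rule CF(2))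
qed

end
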